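(* Let $x:M^n\to\mathbb{R}^{n+1}$ be a locally strongly convex centroaffine hypersurface, and suppose there is a smooth function $\mu$ on $M^n$ such that $(\hat\nabla_ZK)(X,Y)=\mu\big(h(X,Y)Z+h(X,Z)Y+h(Y,Z)X\big)$ for all tangent vectors $X,Y,Z$. Let $p\in M^n$ and let $\{e_1,\dots,e_n\}$ be an $h$-orthonormal basis of $T_pM^n$ such that $e_1$ is a point where $f(u)=h(K_uu,u)$ attains its absolute maximum on $\{u\in T_pM^n: h(u,u)=1\}$, $K_{e_1}e_i=\lambda_ie_i$ for $i=1,\dots,n$, and $\lambda_1\ge2\lambda_i$ for $i\ge2$ (with $f(e_i)=0$ whenever $\lambda_1=2\lambda_i$). Write $K^l_{jk}=h(K_{e_j}e_k,e_l)$. Then at $p$: $$e_l(\mu)=0,\quad 2\le l\le n;$$ $$e_1(\mu)=(2\lambda_l-\lambda_1)(\lambda_l^2-\lambda_1\lambda_l+\varepsilon),\quad 2\le l\le n;$$ $$(2\lambda_k-\lambda_1)(\lambda_l-\lambda_j)K^l_{jk}=0,\quad 2\le j\ne l\le n,\ 1\le k\le n;$$ $$(\lambda_l^2-\lambda_1\lambda_l+\varepsilon)K^l_{ll}=0,\quad 2\le l\le n.$$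
   Context: A centroaffine hypersurface is an immersion $x:M^n\to\mathbb{R}^{n+1}$ whose position vector is everywhere transversal to the tangent space; with $D$ the flat connection of $\mathbb{R}^{n+1}$, $D_Xx_*(Y)=x_*(\nabla_XY)+h(X,Y)(-\varepsilon x)$, $\varepsilon=\pm1$, defines the induced connection $\nabla$ and centroaffine metric $h$. Locally strongly convex means $h$ definite, and $\varepsilon$ is chosen so that $h$ is positive definite; this $\varepsilon$ appears in the claim. $\hat\nabla$ is the Levi-Civita connection of $h$ and $K_XY=\nabla_XY-\hat\nabla_XY$ the difference tensor ($h(K_XY,Z)$ is totally symmetric). An orthonormal basis with the stated properties exists at every point. *)

theory Defs
  imports "HOL-Analysis.Analysis"
begin

text \<open>The hypersurface is described in a chart:
  U is an open subset of the parameter space real^'n and x : U -> R^(n+1),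
  where R^(n+1) is modelled as (real^'n) \<times> real.
  Tangent vectors at u are coefficient vectors X in real^'n w.r.t. the
  coordinate frame d/du_1, ..., d/du_n.\<close>

definition pd :: "'n::finite \<Rightarrow> (real^'n \<Rightarrow> 'b::real_normed_vector) \<Rightarrow> real^'n \<Rightarrow> 'b" where
  "pd i f = (\<lambda>u. frechet_derivative f (at u) (axis i 1))"

fun pds :: "'n::finite list \<Rightarrow> (real^'n \<Rightarrow> 'b::real_normed_vector) \<Rightarrow> real^'n \<Rightarrow> 'b" where
  "pds [] f = f"
| "pds (i # is) f = pd i (pds is f)"

definition smooth_on :: "(real^'n::finite) set \<Rightarrow> (real^'n \<Rightarrow> 'b::real_normed_vector) \<Rightarrow> bool" where
  "smooth_on U f \<longleftrightarrow> (\<forall>is. pds is f differentiable_on U)"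

text \<open>Centroaffine hypersurface data: x is smooth and transversal, and
  G k i j (Christoffel symbols of the induced connection nabla,
  nabla_{d_i} d_j = sum_k G k i j d_k) and the centroaffine metric h i j
  satisfy the structure equation
  D_{d_i} x_*(d_j) = x_*(nabla_{d_i} d_j) + h(d_i,d_j)(-eps x).\<close>
definition centroaffine_hypersurface ::
  "(real^'n::finite) set \<Rightarrow> (real^'n \<Rightarrow> (real^'n) \<times> real) \<Rightarrow> real
    \<Rightarrow> ('n \<Rightarrow> 'n \<Rightarrow> 'n \<Rightarrow> real^'n \<Rightarrow> real) \<Rightarrow> ('n \<Rightarrow> 'n \<Rightarrow> real^'n \<Rightarrow> real) \<Rightarrow> bool" where
  "centroaffine_hypersurface U x eps G h \<longleftrightarrow>
     open U \<and> smooth_on U x \<and> (eps = 1 \<or> eps = -1) \<and>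
     (\<forall>u\<in>U. independent (insert (x u) (range (\<lambda>i. pd i x u))) \<and>
             x u \<notin> range (\<lambda>i. pd i x u) \<and> inj (\<lambda>i. pd i x u)) \<and>
     (\<forall>u\<in>U. \<forall>i j. pd i (pd j x) u =
         (\<Sum>k\<in>UNIV. G k i j u *\<^sub>R pd k x u) + (h i j u * (- eps)) *\<^sub>R x u)"

definition hform :: "('n::finite \<Rightarrow> 'n \<Rightarrow> real^'n \<Rightarrow> real) \<Rightarrow> real^'n \<Rightarrow> real^'n \<Rightarrow> real^'n \<Rightarrow> real" where
  "hform h u X Y = (\<Sum>i\<in>UNIV. \<Sum>j\<in>UNIV. X$i * Y$j * h i j u)"

text \<open>Locally strongly convex with h positive definite.\<close>
definition positive_definite_on ::
  "(real^'n::finite) set \<Rightarrow> ('n \<Rightarrow> 'n \<Rightarrow> real^'n \<Rightarrow> real) \<Rightarrow> bool" where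
  "positive_definite_on U h \<longleftrightarrow> (\<forall>u\<in>U. \<forall>X. X \<noteq> 0 \<longrightarrow> hform h u X X > 0)"

definition gmat :: "('n::finite \<Rightarrow> 'n \<Rightarrow> real^'n \<Rightarrow> real) \<Rightarrow> real^'n \<Rightarrow> real^'n^'n" where
  "gmat h u = (\<chi> i j. h i j u)"

definition LC :: "('n::finite \<Rightarrow> 'n \<Rightarrow> real^'n \<Rightarrow> real) \<Rightarrow> 'n \<Rightarrow> 'n \<Rightarrow> 'n \<Rightarrow> real^'n \<Rightarrow> real" where
  "LC h k i j u = (1/2) * (\<Sum>l\<in>UNIV. matrix_inv (gmat h u) $ k $ l *
        (pd i (h j l) u + pd j (h i l) u - pd l (h i j) u))"

definition Kc :: "('n::finite \<Rightarrow> 'n \<Rightarrow> 'n \<Rightarrow> real^'n \<Rightarrow> real) \<Rightarrow> ('n \<Rightarrow> 'n \<Rightarrow> real^'n \<Rightarrow> real)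
    \<Rightarrow> 'n \<Rightarrow> 'n \<Rightarrow> 'n \<Rightarrow> real^'n \<Rightarrow> real" where
  "Kc G h k i j u = G k i j u - LC h k i j u"

definition Kt :: "('n::finite \<Rightarrow> 'n \<Rightarrow> 'n \<Rightarrow> real^'n \<Rightarrow> real) \<Rightarrow> ('n \<Rightarrow> 'n \<Rightarrow> real^'n \<Rightarrow> real)
    \<Rightarrow> real^'n \<Rightarrow> real^'n \<Rightarrow> real^'n \<Rightarrow> real^'n" where
  "Kt G h u X Y = (\<chi> k. \<Sum>i\<in>UNIV. \<Sum>j\<in>UNIV. X$i * Y$j * Kc G h k i j u)"

definition covK :: "('n::finite \<Rightarrow> 'n \<Rightarrow> 'n \<Rightarrow> real^'n \<Rightarrow> real) \<Rightarrow> ('n \<Rightarrow> 'n \<Rightarrow> real^'n \<Rightarrow> real)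
    \<Rightarrow> real^'n \<Rightarrow> real^'n \<Rightarrow> real^'n \<Rightarrow> real^'n \<Rightarrow> real^'n" where
  "covK G h u Z X Y = (\<chi> l. \<Sum>k\<in>UNIV. \<Sum>i\<in>UNIV. \<Sum>j\<in>UNIV. Z$k * X$i * Y$j *
      (pd k (Kc G h l i j) u
       + (\<Sum>m\<in>UNIV. LC h l k m u * Kc G h m i j u)
       - (\<Sum>m\<in>UNIV. LC h m k i u * Kc G h l m j u)
       - (\<Sum>m\<in>UNIV. LC h m k j u * Kc G h l i m u)))"

end

theory Submission
  imports Defs
begin

definition dir :: "real^'n::finite \<Rightarrow> (real^'n \<Rightarrow> 'b::real_normed_vector) \<Rightarrow> real^'n \<Rightarrow> 'b" where
  "dir W f u = frechet_derivative f (at u) W"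

lemma pd_dir: "pd i f u = dir (axis i 1) f u"
  by (simp add: pd_def dir_def)

lemma dir_hasD: "(f has_derivative F) (at u) \<Longrightarrow> dir W f u = F W"
  by (simp add: dir_def frechet_derivative_at[symmetric])

lemma diff_hasD: "f differentiable (at u) \<Longrightarrow> (f has_derivative (\<lambda>W. dir W f u)) (at u)"
  unfolding dir_def by (metis frechet_derivative_works eta_contract_eq)

lemma frechet_cong:
  assumes "open U" "u \<in> U" "\<And>v. v \<in> U \<Longrightarrow> f v = g v"
  shows "frechet_derivative f (at u) = frechet_derivative g (at u)"
proof -
  have "\<And>F. (f has_derivative F) (at u) \<longleftrightarrow> (g has_derivative F) (at u)"
    using assms has_derivative_transform_within_open[of f _ u UNIV U g]
      has_derivative_transform_within_open[of g _ u UNIV U f] by metis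
  then show ?thesis unfolding frechet_derivative_def by simp
qed

lemma dir_cong: "open U \<Longrightarrow> u \<in> U \<Longrightarrow> (\<And>v. v \<in> U \<Longrightarrow> f v = g v) \<Longrightarrow> dir W f u = dir W g u"
  unfolding dir_def using frechet_cong by metis

lemma pd_cong: "open U \<Longrightarrow> u \<in> U \<Longrightarrow> (\<And>v. v \<in> U \<Longrightarrow> f v = g v) \<Longrightarrow> pd i f u = pd i g u"
  unfolding pd_dir by (rule dir_cong)

lemma diff_cong: "open U \<Longrightarrow> (\<And>v. v \<in> U \<Longrightarrow> f v = g v) \<Longrightarrow> f differentiable_on U \<Longrightarrow> g differentiable_on U"
proof -
  assume U: "open U" and e: "\<And>v. v \<in> U \<Longrightarrow> f v = g v" and f: "f differentiable_on U"
  have "g differentiable (at u)" if u: "u \<in> U" for u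
  proof -
    obtain F where "(f has_derivative F) (at u)"
      using f u U unfolding differentiable_on_eq_differentiable_at[OF U] differentiable_def by blast
    then have "(g has_derivative F) (at u)"
      using has_derivative_transform_within_open[of f F u UNIV U g] U u e by blast
    then show ?thesis unfolding differentiable_def by blast
  qed
  then show ?thesis using differentiable_on_eq_differentiable_at[OF U] by blast
qed

fun Cn :: "(real^'n::finite) set \<Rightarrow> nat \<Rightarrow> (real^'n \<Rightarrow> 'b::real_normed_vector) \<Rightarrow> bool" where
  "Cn U 0 f = (f differentiable_on U)"
| "Cn U (Suc n) f = (f differentiable_on U \<and> (\<forall>i. Cn U n (pd i f)))"

lemma pds_append: "pds (is @ [i]) f = pds is (pd i f)"
  by (induction "is") auto

lemma Cn_iff: "Cn U n f \<longleftrightarrow> (\<forall>is. length is \<le> n \<longrightarrow> pds is f differentiable_on U)"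
proof (induction n arbitrary: f)
  case 0
  then show ?case by auto
next
  case (Suc n)
  show ?case
  proof
    assume H: "Cn U (Suc n) f"
    show "\<forall>is. length is \<le> Suc n \<longrightarrow> pds is f differentiable_on U"
    proof (intro allI impI)
      fix "is" :: "'a list" assume L: "length is \<le> Suc n"
      show "pds is f differentiable_on U"
      proof (cases "is" rule: rev_cases)
        case Nil then show ?thesis using H by simp
      next
        case (snoc js i)
        then have "length js \<le> n" using L by simp
        with H Suc.IH[of "pd i f"] show ?thesis by (simp add: snoc pds_append)
      qed
    qed
  next
    assume H: "\<forall>is. length is \<le> Suc n \<longrightarrow> pds is f differentiable_on U"
    have "f differentiable_on U" using H[rule_format, of "[]"] by simp
    moreover have "Cn U n (pd i f)" for i
      unfolding Suc.IH
    proof (intro allI impI)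
      fix "is" :: "'a list" assume "length is \<le> n"
      then show "pds is (pd i f) differentiable_on U"
        using H[rule_format, of "is @ [i]"] by (simp add: pds_append)
    qed
    ultimately show "Cn U (Suc n) f" by simp
  qed
qed

lemma smooth_Cn: "smooth_on U f \<longleftrightarrow> (\<forall>n. Cn U n f)"
  unfolding smooth_on_def Cn_iff by blast

lemma Cn_mono: "Cn U (Suc n) f \<Longrightarrow> Cn U n f"
  unfolding Cn_iff by simp

lemma Cn_diff_on: "Cn U n f \<Longrightarrow> f differentiable_on U"
  by (cases n) auto

lemma Cn_cong: "open U \<Longrightarrow> (\<And>v. v \<in> U \<Longrightarrow> f v = g v) \<Longrightarrow> Cn U n f \<Longrightarrow> Cn U n g"
proof (induction n arbitrary: f g)
  case 0 then show ?case using diff_cong[of U f g] by simp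
next
  case (Suc n)
  have "Cn U n (pd i g)" for i
    using Suc.IH[of "pd i f" "pd i g"] Suc.prems pd_cong[of U _ f g i] by simp
  then show ?case using Suc.prems diff_cong[of U f g] by simp
qed

lemma smooth_cong: "open U \<Longrightarrow> (\<And>v. v \<in> U \<Longrightarrow> f v = g v) \<Longrightarrow> smooth_on U f \<Longrightarrow> smooth_on U g"
  unfolding smooth_Cn using Cn_cong by blast

lemma smooth_diff_at: "smooth_on U f \<Longrightarrow> open U \<Longrightarrow> u \<in> U \<Longrightarrow> f differentiable (at u)"
  unfolding smooth_Cn using Cn_diff_on differentiable_on_eq_differentiable_at by blast

lemma smooth_pd: "smooth_on U f \<Longrightarrow> smooth_on U (pd i f)"
  unfolding smooth_Cn by (metis Cn.simps(2))

lemma smooth_diff_on: "smooth_on U f \<Longrightarrow> f differentiable_on U"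
  unfolding smooth_Cn using Cn_diff_on by blast

lemma dir_add: "f differentiable (at u) \<Longrightarrow> g differentiable (at u) \<Longrightarrow>
   dir W (\<lambda>u. f u + g u) u = dir W f u + dir W g u"
  by (rule dir_hasD) (intro has_derivative_add diff_hasD)

lemma dir_diff: "f differentiable (at u) \<Longrightarrow> g differentiable (at u) \<Longrightarrow>
   dir W (\<lambda>u. f u - g u) u = dir W f u - dir W g u"
  by (rule dir_hasD) (intro has_derivative_diff diff_hasD)

lemma dir_minus: "f differentiable (at u) \<Longrightarrow> dir W (\<lambda>u. - f u) u = - dir W f u"
  by (rule dir_hasD) (intro has_derivative_minus diff_hasD)

lemma dir_scaleR: "f differentiable (at u) \<Longrightarrow> g differentiable (at u) \<Longrightarrow>
   dir W (\<lambda>u. f u *\<^sub>R g u) u = dir W f u *\<^sub>R g u + f u *\<^sub>R dir W g u"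
  by (rule dir_hasD) (auto intro!: has_derivative_scaleR[THEN has_derivative_eq_rhs] diff_hasD)

lemma dir_mult: "f differentiable (at u) \<Longrightarrow> g differentiable (at u) \<Longrightarrow>
   dir W (\<lambda>u. f u * g u :: real) u = dir W f u * g u + f u * dir W g u"
  using dir_scaleR[of f u g W] by simp

lemma dir_const: "dir W (\<lambda>u. c) u = 0"
  by (rule dir_hasD) simp

lemma dir_linear: "bounded_linear L \<Longrightarrow> f differentiable (at u) \<Longrightarrow>
   dir W (\<lambda>u. L (f u)) u = L (dir W f u)"
  by (rule dir_hasD) (rule bounded_linear.has_derivative[OF _ diff_hasD])

lemma dir_sum: "finite A \<Longrightarrow> (\<And>a. a \<in> A \<Longrightarrow> f a differentiable (at u)) \<Longrightarrow>
   dir W (\<lambda>u. \<Sum>a\<in>A. f a u) u = (\<Sum>a\<in>A. dir W (f a) u)"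
  by (rule dir_hasD) (intro has_derivative_sum diff_hasD)

lemma dir_inverse: "f differentiable (at u) \<Longrightarrow> f u \<noteq> (0::real) \<Longrightarrow>
   dir W (\<lambda>u. inverse (f u)) u = - (inverse (f u) * dir W f u * inverse (f u))"
  by (rule dir_hasD) (rule Deriv.has_derivative_inverse[OF _ diff_hasD])

lemma dir_linW: "f differentiable (at u) \<Longrightarrow> dir W f u = (\<Sum>i\<in>UNIV. W$i *\<^sub>R pd i f u)"
proof -
  assume "f differentiable (at u)"
  then have lin: "linear (\<lambda>W. dir W f u)"
    by (rule has_derivative_linear[OF diff_hasD])
  have "dir W f u = dir (\<Sum>i\<in>UNIV. W$i *\<^sub>R axis i 1) f u"
    using basis_expansion[of W] by (simp add: vector_scalar_mult_def scalar_mult_eq_scaleR)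
  also have "\<dots> = (\<Sum>i\<in>UNIV. dir (W$i *\<^sub>R axis i 1) f u)"
    using linear_sum[OF lin, of "\<lambda>i. W$i *\<^sub>R axis i 1" UNIV] by simp
  also have "\<dots> = (\<Sum>i\<in>UNIV. W$i *\<^sub>R dir (axis i 1) f u)"
    using linear_scale[OF lin] by simp
  finally show ?thesis unfolding pd_dir .
qed

lemma dir_lin_add: "f differentiable (at u) \<Longrightarrow> dir (V + W) f u = dir V f u + dir W f u"
  by (rule linear_add[OF has_derivative_linear[OF diff_hasD]])

lemma dir_lin_scale: "f differentiable (at u) \<Longrightarrow> dir (c *\<^sub>R V) f u = c *\<^sub>R dir V f u"
  by (rule linear_scale[OF has_derivative_linear[OF diff_hasD]])

lemma Cn_add: "open U \<Longrightarrow> Cn U n f \<Longrightarrow> Cn U n g \<Longrightarrow> Cn U n (\<lambda>u. f u + g u)"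
proof (induction n arbitrary: f g)
  case 0 then show ?case by simp
next
  case (Suc n)
  have "Cn U n (pd i (\<lambda>u. f u + g u))" for i
  proof (rule Cn_cong[OF \<open>open U\<close>])
    show "Cn U n (\<lambda>u. pd i f u + pd i g u)" using Suc by simp
    fix v assume "v \<in> U"
    then show "pd i f v + pd i g v = pd i (\<lambda>u. f u + g u) v"
      using Suc.prems by (simp add: pd_dir dir_add differentiable_on_eq_differentiable_at)
  qed
  moreover have "(\<lambda>u. f u + g u) differentiable_on U"
    using Suc.prems Cn_diff_on by (intro differentiable_on_add) auto
  ultimately show ?case by (simp only: Cn.simps) blast
qed

lemma Cn_scaleR: "open U \<Longrightarrow> Cn U n f \<Longrightarrow> Cn U n g \<Longrightarrow> Cn U n (\<lambda>u. f u *\<^sub>R g u)"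
proof (induction n arbitrary: f g)
  case 0 then show ?case by simp
next
  case (Suc n)
  have "Cn U n (pd i (\<lambda>u. f u *\<^sub>R g u))" for i
  proof (rule Cn_cong[OF \<open>open U\<close>])
    have fS: "Cn U (Suc n) f" and gS: "Cn U (Suc n) g" using Suc.prems by auto
    have fn: "Cn U n f" "Cn U n g" using Cn_mono fS gS by auto
    show "Cn U n (\<lambda>u. pd i f u *\<^sub>R g u + f u *\<^sub>R pd i g u)"
      using Suc.IH fS gS fn \<open>open U\<close> by (intro Cn_add) simp_all
    fix v assume "v \<in> U"
    then show "pd i f v *\<^sub>R g v + f v *\<^sub>R pd i g v = pd i (\<lambda>u. f u *\<^sub>R g u) v"
      using Suc.prems by (simp add: pd_dir dir_scaleR differentiable_on_eq_differentiable_at)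
  qed
  moreover have "(\<lambda>u. f u *\<^sub>R g u) differentiable_on U"
    using Suc.prems Cn_diff_on by (intro differentiable_on_scaleR) auto
  ultimately show ?case by (simp only: Cn.simps) blast
qed

lemma Cn_const: "Cn U n (\<lambda>u. c)"
proof (induction n arbitrary: c)
  case 0 then show ?case by simp
next
  case (Suc n)
  have e: "pd i (\<lambda>u. c) = (\<lambda>u. 0)" for i by (simp add: pd_dir dir_const fun_eq_iff)
  have "Cn U n (pd i (\<lambda>u. c))" for i unfolding e by (rule Suc.IH)
  then show ?case by simp
qed

lemma Cn_linear: "open U \<Longrightarrow> bounded_linear L \<Longrightarrow> Cn U n f \<Longrightarrow> Cn U n (\<lambda>u. L (f u))"
proof (induction n arbitrary: f)
  case 0 then show ?case
    by (simp add: differentiable_on_compose[of f U L] bounded_linear_imp_differentiable_on)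
next
  case (Suc n)
  have "Cn U n (pd i (\<lambda>u. L (f u)))" for i
  proof (rule Cn_cong[OF \<open>open U\<close>])
    show "Cn U n (\<lambda>u. L (pd i f u))" using Suc by simp
    fix v assume v: "v \<in> U"
    have "f differentiable (at v)" using Suc.prems v by (simp add: differentiable_on_eq_differentiable_at)
    then show "L (pd i f v) = pd i (\<lambda>u. L (f u)) v"
      unfolding pd_dir by (rule dir_linear[OF \<open>bounded_linear L\<close>, symmetric])
  qed
  then show ?case using Suc.prems
    by (simp add: differentiable_on_compose[of f U L] bounded_linear_imp_differentiable_on)
qed

lemma Cn_inverse: "open U \<Longrightarrow> Cn U n f \<Longrightarrow> (\<And>v. v \<in> U \<Longrightarrow> f v \<noteq> (0::real)) \<Longrightarrow>
   Cn U n (\<lambda>u. inverse (f u))"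
proof (induction n arbitrary: f)
  case 0 then show ?case by simp
next
  case (Suc n)
  have U: "open U" by (rule Suc.prems(1))
  have fS: "Cn U (Suc n) f" by (rule Suc.prems(2))
  have nz: "\<And>v. v \<in> U \<Longrightarrow> f v \<noteq> 0" by (rule Suc.prems(3))
  have inv: "Cn U n (\<lambda>u. inverse (f u))" by (rule Suc.IH[OF U Cn_mono[OF fS] nz])
  have m: "Cn U n (\<lambda>u. - inverse (f u))"
    using Cn_linear[OF U bounded_linear_minus[OF bounded_linear_ident] inv] by simp
  have A: "Cn U n (pd i (\<lambda>u. inverse (f u)))" for i
  proof (rule Cn_cong[OF U])
    have pdi: "Cn U n (pd i f)" using fS by simp
    show "Cn U n (\<lambda>u. (- inverse (f u)) *\<^sub>R (pd i f u *\<^sub>R inverse (f u)))"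
      by (rule Cn_scaleR[OF U m Cn_scaleR[OF U pdi inv]])
    fix v assume v: "v \<in> U"
    have d: "f differentiable (at v)"
      using Cn_diff_on[OF fS] v U by (simp add: differentiable_on_eq_differentiable_at)
    show "(- inverse (f v)) *\<^sub>R (pd i f v *\<^sub>R inverse (f v)) = pd i (\<lambda>u. inverse (f u)) v"
      unfolding pd_dir dir_inverse[OF d nz[OF v]] by simp
  qed
  have B: "(\<lambda>u. inverse (f u)) differentiable_on U"
    by (rule differentiable_on_inverse[OF Cn_diff_on[OF fS] nz])
  show ?case unfolding Cn.simps(2) by (rule conjI[OF B allI[OF A]])
qed

lemma smooth_add: "open U \<Longrightarrow> smooth_on U f \<Longrightarrow> smooth_on U g \<Longrightarrow> smooth_on U (\<lambda>u. f u + g u)"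
  unfolding smooth_Cn using Cn_add by blast
lemma smooth_scaleR: "open U \<Longrightarrow> smooth_on U f \<Longrightarrow> smooth_on U g \<Longrightarrow> smooth_on U (\<lambda>u. f u *\<^sub>R g u)"
  unfolding smooth_Cn using Cn_scaleR by blast
lemma smooth_mult: "open U \<Longrightarrow> smooth_on U f \<Longrightarrow> smooth_on U g \<Longrightarrow> smooth_on U (\<lambda>u. f u * g u :: real)"
  using smooth_scaleR[of U f g] by simp
lemma smooth_const: "smooth_on U (\<lambda>u. c)"
  unfolding smooth_Cn using Cn_const by blast
lemma smooth_linear: "open U \<Longrightarrow> bounded_linear L \<Longrightarrow> smooth_on U f \<Longrightarrow> smooth_on U (\<lambda>u. L (f u))"
  unfolding smooth_Cn using Cn_linear by blast
lemma smooth_inverse: "open U \<Longrightarrow> smooth_on U f \<Longrightarrow> (\<And>v. v \<in> U \<Longrightarrow> f v \<noteq> (0::real)) \<Longrightarrow>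
   smooth_on U (\<lambda>u. inverse (f u))"
  unfolding smooth_Cn using Cn_inverse by blast
lemma smooth_minus: "open U \<Longrightarrow> smooth_on U f \<Longrightarrow> smooth_on U (\<lambda>u. - f u)"
  using smooth_linear[of U "\<lambda>x. - x" f] bounded_linear_minus[OF bounded_linear_ident] by simp
lemma smooth_diff: "open U \<Longrightarrow> smooth_on U f \<Longrightarrow> smooth_on U g \<Longrightarrow> smooth_on U (\<lambda>u. f u - g u)"
proof -
  assume a: "open U" "smooth_on U f" "smooth_on U g"
  have "smooth_on U (\<lambda>u. f u + - g u)" using a by (intro smooth_add smooth_minus)
  then show ?thesis by simp
qed
lemma smooth_divide: "open U \<Longrightarrow> smooth_on U f \<Longrightarrow> smooth_on U g \<Longrightarrow> (\<And>v. v \<in> U \<Longrightarrow> g v \<noteq> 0) \<Longrightarrow>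
   smooth_on U (\<lambda>u. f u / g u :: real)"
proof -
  assume a: "open U" "smooth_on U f" "smooth_on U g" "\<And>v. v \<in> U \<Longrightarrow> g v \<noteq> 0"
  have "smooth_on U (\<lambda>u. f u * inverse (g u))" using a by (intro smooth_mult smooth_inverse) auto
  then show ?thesis by (simp add: divide_inverse)
qed

lemma smooth_sum:
  assumes U: "open U" and A: "finite A" and f: "\<And>a. a \<in> A \<Longrightarrow> smooth_on U (f a)"
  shows "smooth_on U (\<lambda>u. \<Sum>a\<in>A. f a u)"
  using A f
proof (induction A rule: finite_induct)
  case empty then show ?case by (simp add: smooth_const)
next
  case (insert a A)
  then show ?case using smooth_add[OF U, of "f a" "\<lambda>u. \<Sum>a\<in>A. f a u"] by simp
qed

lemma smooth_prod:
  assumes U: "open U" and A: "finite A" and f: "\<And>a. a \<in> A \<Longrightarrow> smooth_on U (f a)"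
  shows "smooth_on U (\<lambda>u. \<Prod>a\<in>A. f a u :: real)"
  using A f
proof (induction A rule: finite_induct)
  case empty then show ?case by (simp add: smooth_const)
next
  case (insert a A)
  then show ?case using smooth_mult[OF U, of "f a" "\<lambda>u. \<Prod>a\<in>A. f a u"] by simp
qed

lemma smooth_dir: "open U \<Longrightarrow> smooth_on U f \<Longrightarrow> smooth_on U (\<lambda>u. dir W f u)"
proof -
  assume U: "open U" and f: "smooth_on U f"
  have "smooth_on U (\<lambda>u. \<Sum>i\<in>UNIV. W$i *\<^sub>R pd i f u)"
    using f by (intro smooth_sum smooth_scaleR smooth_const smooth_pd U) auto
  then show ?thesis
    by (rule smooth_cong[OF U, rotated]) (simp add: dir_linW smooth_diff_at[OF f U])
qed

lemma smooth_nth: "open U \<Longrightarrow> smooth_on U f \<Longrightarrow> smooth_on U (\<lambda>u. f u $ l)"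
  using smooth_linear[of U "\<lambda>v. v $ l" f] bounded_linear_vec_nth by blast

lemma vec_sum_axis: "(\<chi> l. f l) = (\<Sum>l\<in>UNIV. f l *\<^sub>R (axis l 1 :: real^'m::finite))"
  by (simp add: vec_eq_iff axis_def if_distrib cong: if_cong)

lemma smooth_vec: "open U \<Longrightarrow> (\<And>l. smooth_on U (f l)) \<Longrightarrow> smooth_on U (\<lambda>u. (\<chi> l. f l u) :: real^'m::finite)"
proof -
  assume U: "open U" and f: "\<And>l. smooth_on U (f l)"
  have "smooth_on U (\<lambda>u. \<Sum>l\<in>UNIV. f l u *\<^sub>R (axis l 1 :: real^'m))"
    using f by (intro smooth_sum smooth_scaleR smooth_const U) auto
  then show ?thesis by (simp only: vec_sum_axis[symmetric])
qed

lemma dir_nth: "f differentiable (at u) \<Longrightarrow> dir W (\<lambda>u. f u $ l) u = dir W f u $ l"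
  using dir_linear[of "\<lambda>v. v $ l" f u W] bounded_linear_vec_nth by blast

lemma dir_vec: "(\<And>l. f l differentiable (at u)) \<Longrightarrow> dir W (\<lambda>u. (\<chi> l. f l u) :: real^'m::finite) u = (\<chi> l. dir W (f l) u)"
proof -
  assume d: "\<And>l. f l differentiable (at u)"
  have "dir W (\<lambda>u. (\<chi> l. f l u) :: real^'m::finite) u = dir W (\<lambda>u. \<Sum>l\<in>UNIV. f l u *\<^sub>R (axis l 1 :: real^'m)) u"
    by (simp only: vec_sum_axis)
  also have "\<dots> = (\<Sum>l\<in>UNIV. dir W (\<lambda>u. f l u *\<^sub>R (axis l 1 :: real^'m)) u)"
    using d by (intro dir_sum) auto
  also have "\<dots> = (\<Sum>l\<in>UNIV. dir W (f l) u *\<^sub>R (axis l 1 :: real^'m))"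
    using d by (simp add: dir_scaleR dir_const)
  finally show ?thesis by (simp only: vec_sum_axis)
qed

lemma line_deriv:
  fixes f :: "real^'n::finite \<Rightarrow> real"
  assumes "f differentiable (at (c + t *\<^sub>R a + d))"
  shows "((\<lambda>s. f (c + s *\<^sub>R a + d)) has_real_derivative dir a f (c + t *\<^sub>R a + d)) (at t)"
proof -
  have h1: "((\<lambda>s. c + s *\<^sub>R a + d) has_derivative (\<lambda>h. h *\<^sub>R a)) (at t)"
    by (auto intro!: derivative_eq_intros)
  have h2: "(f has_derivative (\<lambda>W. dir W f (c + t *\<^sub>R a + d))) (at (c + t *\<^sub>R a + d))"
    by (rule diff_hasD[OF assms])
  have "((\<lambda>s. f (c + s *\<^sub>R a + d)) has_derivative (\<lambda>h. dir (h *\<^sub>R a) f (c + t *\<^sub>R a + d))) (at t)"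
    using has_derivative_compose[OF h1 h2] by simp
  then show ?thesis
    by (rule has_derivative_imp_has_field_derivative) (simp add: dir_lin_scale[OF assms])
qed

lemma mixed_mvt:
  fixes f :: "real^'n::finite \<Rightarrow> real"
  assumes U: "open U" and f: "smooth_on U f" and ball: "ball u r \<subseteq> U"
    and s: "0 < s" and t: "0 < t" and st: "s + t < r"
  shows "\<exists>\<xi>. dist \<xi> u < s + t \<and>
     f (u + s *\<^sub>R axis i 1 + t *\<^sub>R axis j 1) - f (u + s *\<^sub>R axis i 1) - f (u + t *\<^sub>R axis j 1) + f u
       = s * t * pd j (pd i f) \<xi>"
proof -
  define a where "a = (axis i 1 :: real^'n)"
  define b where "b = (axis j 1 :: real^'n)"
  have na: "norm a = 1" "norm b = 1" by (simp_all add: a_def b_def)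
  have dist_le: "dist (u + \<sigma> *\<^sub>R a + \<tau> *\<^sub>R b) u \<le> \<sigma> + \<tau>" if "0 \<le> \<sigma>" "0 \<le> \<tau>" for \<sigma> \<tau>
  proof -
    have "norm (\<sigma> *\<^sub>R a + \<tau> *\<^sub>R b) \<le> norm (\<sigma> *\<^sub>R a) + norm (\<tau> *\<^sub>R b)" by (rule norm_triangle_ineq)
    also have "\<dots> = \<sigma> + \<tau>" using that na by simp
    finally show ?thesis by (simp add: dist_norm add.assoc)
  qed
  have inU: "u + \<sigma> *\<^sub>R a + \<tau> *\<^sub>R b \<in> U" if "0 \<le> \<sigma>" "\<sigma> \<le> s" "0 \<le> \<tau>" "\<tau> \<le> t" for \<sigma> \<tau>
  proof -
    have "dist (u + \<sigma> *\<^sub>R a + \<tau> *\<^sub>R b) u < r" using dist_le[of \<sigma> \<tau>] that st by linarith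
    then show ?thesis using ball by (auto simp: dist_commute)
  qed
  have pf: "smooth_on U (pd i f)" using f by (rule smooth_pd)
  have dfa: "f differentiable (at v)" if "v \<in> U" for v using smooth_diff_at[OF f U that] .
  have dpa: "pd i f differentiable (at v)" if "v \<in> U" for v using smooth_diff_at[OF pf U that] .
  define \<phi> where "\<phi> \<sigma> = f (u + \<sigma> *\<^sub>R a + t *\<^sub>R b) - f (u + \<sigma> *\<^sub>R a + 0)" for \<sigma>
  have derphi: "(\<phi> has_real_derivative (pd i f (u + \<sigma> *\<^sub>R a + t *\<^sub>R b) - pd i f (u + \<sigma> *\<^sub>R a + 0))) (at \<sigma>)"
    if "0 \<le> \<sigma>" "\<sigma> \<le> s" for \<sigma>
  proof -
    have p1: "u + \<sigma> *\<^sub>R a + t *\<^sub>R b \<in> U" using inU[of \<sigma> t] that t by simp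
    have p2: "u + \<sigma> *\<^sub>R a + 0 \<in> U" using inU[of \<sigma> 0] that t by simp
    show ?thesis unfolding \<phi>_def[abs_def] pd_dir a_def[symmetric]
      by (intro DERIV_diff line_deriv dfa p1 p2)
  qed
  obtain \<sigma> where \<sigma>: "0 < \<sigma>" "\<sigma> < s"
    and eq1: "\<phi> s - \<phi> 0 = (s - 0) * (pd i f (u + \<sigma> *\<^sub>R a + t *\<^sub>R b) - pd i f (u + \<sigma> *\<^sub>R a + 0))"
    using MVT2[OF s derphi] by blast
  define \<psi> where "\<psi> \<tau> = pd i f ((u + \<sigma> *\<^sub>R a) + \<tau> *\<^sub>R b + 0)" for \<tau>
  have derpsi: "(\<psi> has_real_derivative pd j (pd i f) ((u + \<sigma> *\<^sub>R a) + \<tau> *\<^sub>R b + 0)) (at \<tau>)"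
    if "0 \<le> \<tau>" "\<tau> \<le> t" for \<tau>
  proof -
    have p1: "(u + \<sigma> *\<^sub>R a) + \<tau> *\<^sub>R b + 0 \<in> U" using inU[of \<sigma> \<tau>] that \<sigma> by simp
    show ?thesis unfolding \<psi>_def[abs_def] pd_dir[of j] b_def[symmetric]
      by (intro line_deriv dpa p1)
  qed
  obtain \<tau> where \<tau>: "0 < \<tau>" "\<tau> < t"
    and eq2: "\<psi> t - \<psi> 0 = (t - 0) * pd j (pd i f) ((u + \<sigma> *\<^sub>R a) + \<tau> *\<^sub>R b + 0)"
    using MVT2[OF t derpsi] by blast
  define \<xi> where "\<xi> = u + \<sigma> *\<^sub>R a + \<tau> *\<^sub>R b"
  have "dist \<xi> u < s + t" using dist_le[of \<sigma> \<tau>] \<sigma> \<tau> unfolding \<xi>_def by linarith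
  moreover have "f (u + s *\<^sub>R a + t *\<^sub>R b) - f (u + s *\<^sub>R a) - f (u + t *\<^sub>R b) + f u = \<phi> s - \<phi> 0"
    unfolding \<phi>_def by simp
  moreover have "\<phi> s - \<phi> 0 = s * t * pd j (pd i f) \<xi>"
    using eq1 eq2 unfolding \<psi>_def \<xi>_def by simp
  ultimately show ?thesis unfolding a_def b_def by metis
qed

lemma schwarz:
  fixes f :: "real^'n::finite \<Rightarrow> real"
  assumes U: "open U" and f: "smooth_on U f" and u: "u \<in> U"
  shows "pd i (pd j f) u = pd j (pd i f) u"
proof -
  obtain r where r: "r > 0" "ball u r \<subseteq> U" using U u open_contains_ball by blast
  define A where "A = pd j (pd i f) u"
  define B where "B = pd i (pd j f) u"
  have cA: "continuous (at u) (pd j (pd i f))"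
    using smooth_diff_at[OF smooth_pd[OF smooth_pd[OF f]] U u] differentiable_imp_continuous_within by blast
  have cB: "continuous (at u) (pd i (pd j f))"
    using smooth_diff_at[OF smooth_pd[OF smooth_pd[OF f]] U u] differentiable_imp_continuous_within by blast
  have key: "\<bar>A - B\<bar> < e" if e: "e > 0" for e
  proof -
    obtain d1 where d1: "d1 > 0" "\<And>x. dist x u < d1 \<Longrightarrow> dist (pd j (pd i f) x) A < e/2"
      using cA e unfolding continuous_at_eps_delta A_def by (meson half_gt_zero)
    obtain d2 where d2: "d2 > 0" "\<And>x. dist x u < d2 \<Longrightarrow> dist (pd i (pd j f) x) B < e/2"
      using cB e unfolding continuous_at_eps_delta B_def by (meson half_gt_zero)
    define s where "s = min r (min d1 d2) / 3"
    have s: "s > 0" "s + s < r" "s + s < d1" "s + s < d2" using r d1 d2 by (auto simp: s_def)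
    obtain \<xi>1 where x1: "dist \<xi>1 u < s + s"
      "f (u + s *\<^sub>R axis i 1 + s *\<^sub>R axis j 1) - f (u + s *\<^sub>R axis i 1) - f (u + s *\<^sub>R axis j 1) + f u
       = s * s * pd j (pd i f) \<xi>1"
      using mixed_mvt[OF U f r(2) s(1) s(1) s(2), of i j] by blast
    obtain \<xi>2 where x2: "dist \<xi>2 u < s + s"
      "f (u + s *\<^sub>R axis j 1 + s *\<^sub>R axis i 1) - f (u + s *\<^sub>R axis j 1) - f (u + s *\<^sub>R axis i 1) + f u
       = s * s * pd i (pd j f) \<xi>2"
      using mixed_mvt[OF U f r(2) s(1) s(1) s(2), of j i] by blast
    have "s * s * pd j (pd i f) \<xi>1 = s * s * pd i (pd j f) \<xi>2"
      using x1(2) x2(2) by (simp add: algebra_simps)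
    then have eqx: "pd j (pd i f) \<xi>1 = pd i (pd j f) \<xi>2" using s(1) by simp
    have "dist (pd j (pd i f) \<xi>1) A < e/2" using d1(2) x1(1) s by simp
    moreover have "dist (pd i (pd j f) \<xi>2) B < e/2" using d2(2) x2(1) s by simp
    ultimately show ?thesis using eqx by (simp only: dist_real_def abs_less_iff) linarith
  qed
  have "A = B"
  proof (rule ccontr)
    assume "A \<noteq> B"
    then have "\<bar>A - B\<bar> > 0" by simp
    then show False using key[of "\<bar>A - B\<bar>"] by simp
  qed
  then show ?thesis unfolding A_def B_def by simp
qed

lemma pd_inner: "f differentiable (at u) \<Longrightarrow> pd i (\<lambda>v. f v \<bullet> b) u = pd i f u \<bullet> b"
  using dir_linear[OF bounded_linear_inner_left, of f u "axis i 1" b] by (simp add: pd_dir)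

lemma schwarz_eucl:
  fixes f :: "real^'n::finite \<Rightarrow> 'b::euclidean_space"
  assumes U: "open U" and f: "smooth_on U f" and u: "u \<in> U"
  shows "pd i (pd j f) u = pd j (pd i f) u"
proof (rule euclidean_eqI)
  fix b :: 'b assume "b \<in> Basis"
  have g: "smooth_on U (\<lambda>v. f v \<bullet> b)" by (rule smooth_linear[OF U bounded_linear_inner_left f])
  have e1: "pd i (pd j (\<lambda>v. f v \<bullet> b)) u = pd i (pd j f) u \<bullet> b" for i j
  proof -
    have "pd i (pd j (\<lambda>v. f v \<bullet> b)) u = pd i (\<lambda>v. pd j f v \<bullet> b) u"
      by (rule pd_cong[OF U u]) (rule pd_inner[OF smooth_diff_at[OF f U]])
    also have "\<dots> = pd i (pd j f) u \<bullet> b"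
      by (rule pd_inner[OF smooth_diff_at[OF smooth_pd[OF f] U u]])
    finally show ?thesis .
  qed
  show "pd i (pd j f) u \<bullet> b = pd j (pd i f) u \<bullet> b"
    using e1[of i j] e1[of j i] schwarz[OF U g u, of i j] by simp
qed

lemma dir_dir_expand:
  assumes U: "open U" and f: "smooth_on U f" and u: "u \<in> U"
  shows "dir W (\<lambda>v. dir Z f v) u = (\<Sum>j\<in>UNIV. \<Sum>i\<in>UNIV. (W$i * Z$j) *\<^sub>R pd i (pd j f) u)"
proof -
  have dj: "(\<lambda>v. Z$j *\<^sub>R pd j f v) differentiable (at u)" for j
    by (rule smooth_diff_at[OF smooth_scaleR[OF U smooth_const smooth_pd[OF f]] U u])
  have "dir W (\<lambda>v. dir Z f v) u = dir W (\<lambda>v. \<Sum>j\<in>UNIV. Z$j *\<^sub>R pd j f v) u"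
    by (rule dir_cong[OF U u]) (simp add: dir_linW smooth_diff_at[OF f U])
  also have "\<dots> = (\<Sum>j\<in>UNIV. dir W (\<lambda>v. Z$j *\<^sub>R pd j f v) u)"
    by (rule dir_sum) (use dj in auto)
  also have "\<dots> = (\<Sum>j\<in>UNIV. Z$j *\<^sub>R dir W (pd j f) u)"
    by (simp add: dir_scaleR dir_const smooth_diff_at[OF smooth_pd[OF f] U u])
  also have "\<dots> = (\<Sum>j\<in>UNIV. Z$j *\<^sub>R (\<Sum>i\<in>UNIV. W$i *\<^sub>R pd i (pd j f) u))"
    by (simp add: dir_linW smooth_diff_at[OF smooth_pd[OF f] U u])
  finally show ?thesis by (simp add: scaleR_sum_right mult.commute)
qed

lemma schwarz_dir:
  fixes f :: "real^'n::finite \<Rightarrow> 'b::euclidean_space"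
  assumes U: "open U" and f: "smooth_on U f" and u: "u \<in> U"
  shows "dir W (\<lambda>v. dir Z f v) u = dir Z (\<lambda>v. dir W f v) u"
proof -
  have "dir W (\<lambda>v. dir Z f v) u = (\<Sum>j\<in>UNIV. \<Sum>i\<in>UNIV. (W$i * Z$j) *\<^sub>R pd i (pd j f) u)"
    by (rule dir_dir_expand[OF U f u])
  also have "\<dots> = (\<Sum>i\<in>UNIV. \<Sum>j\<in>UNIV. (W$i * Z$j) *\<^sub>R pd i (pd j f) u)"
    by (rule sum.swap)
  also have "\<dots> = (\<Sum>i\<in>UNIV. \<Sum>j\<in>UNIV. (Z$j * W$i) *\<^sub>R pd j (pd i f) u)"
    by (simp add: schwarz_eucl[OF U f u] mult.commute)
  also have "\<dots> = dir Z (\<lambda>v. dir W f v) u"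
    by (rule dir_dir_expand[OF U f u, symmetric])
  finally show ?thesis .
qed

lemma smooth_det:
  fixes A :: "real^'n::finite \<Rightarrow> real^'m::finite^'m"
  assumes U: "open U" and A: "\<And>i j. smooth_on U (\<lambda>u. A u $ i $ j)"
  shows "smooth_on U (\<lambda>u. det (A u))"
  unfolding det_def
  by (intro smooth_sum smooth_mult smooth_const smooth_prod U A) (auto simp: finite_permutations)

lemma smooth_cramer:
  fixes A :: "real^'n::finite \<Rightarrow> real^'m::finite^'m" and b y :: "real^'n \<Rightarrow> real^'m"
  assumes U: "open U" and A: "\<And>i j. smooth_on U (\<lambda>u. A u $ i $ j)" and b: "\<And>i. smooth_on U (\<lambda>u. b u $ i)"
    and d: "\<And>u. u \<in> U \<Longrightarrow> det (A u) \<noteq> 0" and y: "\<And>u. u \<in> U \<Longrightarrow> A u *v y u = b u"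
  shows "smooth_on U (\<lambda>u. y u $ k)"
proof -
  have e: "smooth_on U (\<lambda>u. (\<chi> i j. if j = k then b u $ i else A u $ i $ j) $ i $ j)" for i j
    by (cases "j = k") (simp_all add: A b)
  have "smooth_on U (\<lambda>u. det (\<chi> i j. if j = k then b u $ i else A u $ i $ j) / det (A u))"
    by (rule smooth_divide[OF U smooth_det[OF U e] smooth_det[OF U A] d])
  moreover have "det (\<chi> i j. if j = k then b u $ i else A u $ i $ j) / det (A u) = y u $ k" if "u \<in> U" for u
    using cramer[OF d[OF that], of "y u" "b u"] y[OF that] by simp
  ultimately show ?thesis by (rule smooth_cong[OF U, rotated]) blast
qed

lemma matrix_inv_props:
  fixes A :: "real^'m::finite^'m"
  assumes "invertible A"
  shows "A ** matrix_inv A = mat 1" "matrix_inv A ** A = mat 1"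
proof -
  have "\<exists>A'. A ** A' = mat 1 \<and> A' ** A = mat 1" using assms unfolding invertible_def by blast
  then have "A ** matrix_inv A = mat 1 \<and> matrix_inv A ** A = mat 1"
    unfolding matrix_inv_def by (rule someI_ex)
  then show "A ** matrix_inv A = mat 1" "matrix_inv A ** A = mat 1" by auto
qed

lemma invertible_if_ker:
  fixes A :: "real^'m::finite^'m"
  assumes "\<And>y. A *v y = 0 \<Longrightarrow> y = 0"
  shows "invertible A"
proof -
  have "inj ((*v) A)"
  proof (rule injI)
    fix x y assume "A *v x = A *v y"
    then have "A *v (x - y) = 0" by (simp add: matrix_vector_mult_diff_distrib)
    then show "x = y" using assms by fastforce
  qed
  then show ?thesis unfolding invertible_left_inverse matrix_left_invertible_injective .
qed

lemma smooth_matrix_inv: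
  fixes A :: "real^'n::finite \<Rightarrow> real^'m::finite^'m"
  assumes U: "open U" and A: "\<And>i j. smooth_on U (\<lambda>u. A u $ i $ j)"
    and inv: "\<And>u. u \<in> U \<Longrightarrow> invertible (A u)"
  shows "smooth_on U (\<lambda>u. matrix_inv (A u) $ k $ l)"
proof -
  let ?y = "\<lambda>u. (\<chi> k'. matrix_inv (A u) $ k' $ l) :: real^'m"
  let ?b = "\<lambda>u. (\<chi> i. if i = l then 1 else 0) :: real^'m"
  have yf: "A u *v ?y u = ?b u" if "u \<in> U" for u
  proof -
    have "A u ** matrix_inv (A u) = mat 1" using matrix_inv_props(1)[OF inv[OF that]] .
    then have "\<And>i. (A u ** matrix_inv (A u)) $ i $ l = mat 1 $ i $ l" by simp
    then show ?thesis
      by (simp add: vec_eq_iff matrix_vector_mult_def matrix_matrix_mult_def mat_def)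
  qed
  have df: "det (A u) \<noteq> 0" if "u \<in> U" for u using inv[OF that] unfolding invertible_det_nz .
  have "smooth_on U (\<lambda>u. ?y u $ k)"
    by (rule smooth_cramer[OF U A _ df yf]) (simp add: smooth_const)
  then show ?thesis by simp
qed

definition bil :: "('n::finite \<Rightarrow> 'n \<Rightarrow> 'n \<Rightarrow> real^'n \<Rightarrow> real) \<Rightarrow> real^'n \<Rightarrow> real^'n \<Rightarrow> real^'n \<Rightarrow> real^'n" where
  "bil \<Gamma> u X Y = (\<chi> l. \<Sum>k\<in>UNIV. \<Sum>m\<in>UNIV. X$k * Y$m * \<Gamma> l k m u)"

definition dar :: "real^'n::finite \<Rightarrow> ('n \<Rightarrow> 'n \<Rightarrow> 'n \<Rightarrow> real^'n \<Rightarrow> real) \<Rightarrow> ('n \<Rightarrow> 'n \<Rightarrow> 'n \<Rightarrow> real^'n \<Rightarrow> real)" where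
  "dar W \<Gamma> = (\<lambda>l k m u. dir W (\<Gamma> l k m) u)"

definition nab :: "('n::finite \<Rightarrow> 'n \<Rightarrow> 'n \<Rightarrow> real^'n \<Rightarrow> real) \<Rightarrow> real^'n \<Rightarrow> (real^'n \<Rightarrow> real^'n) \<Rightarrow> real^'n \<Rightarrow> real^'n" where
  "nab \<Gamma> W F u = dir W F u + bil \<Gamma> u W (F u)"

definition Rm :: "('n::finite \<Rightarrow> 'n \<Rightarrow> 'n \<Rightarrow> real^'n \<Rightarrow> real) \<Rightarrow> real^'n \<Rightarrow> real^'n \<Rightarrow> real^'n \<Rightarrow> real^'n \<Rightarrow> real^'n" where
  "Rm \<Gamma> u W Z v = bil (dar W \<Gamma>) u Z v - bil (dar Z \<Gamma>) u W v + bil \<Gamma> u W (bil \<Gamma> u Z v) - bil \<Gamma> u Z (bil \<Gamma> u W v)"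

lemma bil_add1: "bil \<Gamma> u (X + X') Y = bil \<Gamma> u X Y + bil \<Gamma> u X' Y"
  by (simp add: bil_def vec_eq_iff distrib_right sum.distrib)
lemma bil_add2: "bil \<Gamma> u X (Y + Y') = bil \<Gamma> u X Y + bil \<Gamma> u X Y'"
  by (simp add: bil_def vec_eq_iff distrib_right distrib_left sum.distrib)
lemma bil_diff1: "bil \<Gamma> u (X - X') Y = bil \<Gamma> u X Y - bil \<Gamma> u X' Y"
  by (simp add: bil_def vec_eq_iff left_diff_distrib sum_subtractf)
lemma bil_diff2: "bil \<Gamma> u X (Y - Y') = bil \<Gamma> u X Y - bil \<Gamma> u X Y'"
  by (simp add: bil_def vec_eq_iff left_diff_distrib right_diff_distrib sum_subtractf)
lemma bil_scale1: "bil \<Gamma> u (c *\<^sub>R X) Y = c *\<^sub>R bil \<Gamma> u X Y"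
  by (simp add: bil_def vec_eq_iff sum_distrib_left mult.assoc)
lemma bil_scale2: "bil \<Gamma> u X (c *\<^sub>R Y) = c *\<^sub>R bil \<Gamma> u X Y"
  by (simp add: bil_def vec_eq_iff sum_distrib_left mult_ac)
lemma bil_zero1 [simp]: "bil \<Gamma> u 0 Y = 0"
  by (simp add: bil_def vec_eq_iff)
lemma bil_zero2 [simp]: "bil \<Gamma> u X 0 = 0"
  by (simp add: bil_def vec_eq_iff)
lemma bil_arr_add: "bil (\<lambda>l k m u. A l k m u + B l k m u) u X Y = bil A u X Y + bil B u X Y"
  by (simp add: bil_def vec_eq_iff distrib_left sum.distrib)
lemma bil_arr_diff: "bil (\<lambda>l k m u. A l k m u - B l k m u) u X Y = bil A u X Y - bil B u X Y"
  by (simp add: bil_def vec_eq_iff right_diff_distrib sum_subtractf)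

lemma diff_nth: "X differentiable (at u) \<Longrightarrow> (\<lambda>u. X u $ k) differentiable (at u)"
  unfolding differentiable_def
  using bounded_linear.has_derivative[OF bounded_linear_vec_nth] by blast

lemma dir_bil:
  assumes G: "\<And>l k m. \<Gamma> l k m differentiable (at u)"
    and X: "X differentiable (at u)" and Y: "Y differentiable (at u)"
  shows "dir W (\<lambda>u. bil \<Gamma> u (X u) (Y u)) u
     = bil (dar W \<Gamma>) u (X u) (Y u) + bil \<Gamma> u (dir W X u) (Y u) + bil \<Gamma> u (X u) (dir W Y u)"
proof -
  have Xk: "(\<lambda>u. X u $ k) differentiable (at u)" for k by (rule diff_nth[OF X])
  have Ym: "(\<lambda>u. Y u $ m) differentiable (at u)" for m by (rule diff_nth[OF Y])
  have XY: "(\<lambda>u. X u $ k * Y u $ m) differentiable (at u)" for k m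
    using Xk Ym by (rule differentiable_mult)
  have XYG: "(\<lambda>u. X u $ k * Y u $ m * \<Gamma> l k m u) differentiable (at u)" for k m l
    using XY G by (rule differentiable_mult)
  have S: "(\<lambda>u. \<Sum>m\<in>UNIV. X u $ k * Y u $ m * \<Gamma> l k m u) differentiable (at u)" for k l
    using XYG by (intro differentiable_sum) auto
  have SS: "(\<lambda>u. \<Sum>k\<in>UNIV. \<Sum>m\<in>UNIV. X u $ k * Y u $ m * \<Gamma> l k m u) differentiable (at u)" for l
    using S by (intro differentiable_sum) auto
  have trm: "dir W (\<lambda>u. X u $ k * Y u $ m * \<Gamma> l k m u) u
      = dir W X u $ k * Y u $ m * \<Gamma> l k m u + X u $ k * dir W Y u $ m * \<Gamma> l k m u
        + X u $ k * Y u $ m * dir W (\<Gamma> l k m) u" for k m l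
    using dir_mult[OF XY G, of W] dir_mult[OF Xk Ym, of W] dir_nth[OF X] dir_nth[OF Y]
    by (simp add: algebra_simps)
  have "dir W (\<lambda>u. bil \<Gamma> u (X u) (Y u)) u
      = (\<chi> l. dir W (\<lambda>u. \<Sum>k\<in>UNIV. \<Sum>m\<in>UNIV. X u $ k * Y u $ m * \<Gamma> l k m u) u)"
    unfolding bil_def by (rule dir_vec[OF SS])
  also have "\<dots> = (\<chi> l. \<Sum>k\<in>UNIV. \<Sum>m\<in>UNIV. dir W (\<lambda>u. X u $ k * Y u $ m * \<Gamma> l k m u) u)"
    using S XYG by (simp add: dir_sum)
  also have "\<dots> = bil (dar W \<Gamma>) u (X u) (Y u) + bil \<Gamma> u (dir W X u) (Y u) + bil \<Gamma> u (X u) (dir W Y u)"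
    unfolding trm by (simp add: bil_def dar_def vec_eq_iff sum.distrib algebra_simps)
  finally show ?thesis .
qed

lemma smooth_bil:
  assumes U: "open U" and G: "\<And>l k m. smooth_on U (\<Gamma> l k m)"
    and X: "smooth_on U X" and Y: "smooth_on U Y"
  shows "smooth_on U (\<lambda>u. bil \<Gamma> u (X u) (Y u))"
  unfolding bil_def
  by (intro smooth_vec smooth_sum smooth_mult smooth_nth U G X Y) auto

lemma smooth_dar: "open U \<Longrightarrow> (\<And>l k m. smooth_on U (\<Gamma> l k m)) \<Longrightarrow> smooth_on U (dar W \<Gamma> l k m)"
  unfolding dar_def by (rule smooth_dir)

lemma smooth_nab:
  assumes U: "open U" and G: "\<And>l k m. smooth_on U (\<Gamma> l k m)" and F: "smooth_on U F"
  shows "smooth_on U (nab \<Gamma> W F)"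
proof -
  have "smooth_on U (\<lambda>u. dir W F u + bil \<Gamma> u ((\<lambda>u. W) u) (F u))"
    by (intro smooth_add U smooth_dir F smooth_bil G smooth_const)
  then show ?thesis unfolding nab_def[abs_def] by simp
qed

lemma diff_nab:
  assumes U: "open U" and G: "\<And>l k m. smooth_on U (\<Gamma> l k m)" and F: "smooth_on U F" and u: "u \<in> U"
  shows "nab \<Gamma> W F differentiable (at u)"
  by (rule smooth_diff_at[OF smooth_nab[OF U G F] U u])

lemma curvature:
  assumes U: "open U" and G: "\<And>l k m. smooth_on U (\<Gamma> l k m)" and F: "smooth_on U F" and u: "u \<in> U"
  shows "nab \<Gamma> W (nab \<Gamma> Z F) u - nab \<Gamma> Z (nab \<Gamma> W F) u = Rm \<Gamma> u W Z (F u)"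
proof -
  have Gd: "\<And>l k m. \<Gamma> l k m differentiable (at u)" using smooth_diff_at[OF G U u] .
  have Fd: "F differentiable (at u)" using smooth_diff_at[OF F U u] .
  have e: "dir A (nab \<Gamma> B F) u = dir A (dir B F) u + bil (dar A \<Gamma>) u B (F u) + bil \<Gamma> u B (dir A F u)" for A B
  proof -
    have d1: "dir B F differentiable (at u)" by (rule smooth_diff_at[OF smooth_dir[OF U F] U u])
    have d2: "(\<lambda>v. bil \<Gamma> v ((\<lambda>v. B) v) (F v)) differentiable (at u)"
      by (rule smooth_diff_at[OF smooth_bil[OF U G smooth_const F] U u])
    have "dir A (nab \<Gamma> B F) u = dir A (\<lambda>v. dir B F v + bil \<Gamma> v ((\<lambda>v. B) v) (F v)) u"
      unfolding nab_def by simp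
    also have "\<dots> = dir A (dir B F) u + dir A (\<lambda>v. bil \<Gamma> v ((\<lambda>v. B) v) (F v)) u"
      using dir_add[OF d1 d2] by simp
    also have "dir A (\<lambda>v. bil \<Gamma> v ((\<lambda>v. B) v) (F v)) u
        = bil (dar A \<Gamma>) u B (F u) + bil \<Gamma> u (dir A (\<lambda>v. B) u) (F u) + bil \<Gamma> u B (dir A F u)"
      by (rule dir_bil[OF Gd differentiable_const Fd])
    finally show ?thesis by (simp add: dir_const)
  qed
  have sw: "dir W (dir Z F) u = dir Z (dir W F) u" by (rule schwarz_dir[OF U F u])
  show ?thesis
    unfolding nab_def[of \<Gamma> W "nab \<Gamma> Z F"] nab_def[of \<Gamma> Z "nab \<Gamma> W F"] e sw
    by (simp add: Rm_def nab_def bil_add2 algebra_simps)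
qed

definition co :: "'n::finite option \<Rightarrow> (real^'n) \<times> real \<Rightarrow> real" where
  "co r w = (case r of None \<Rightarrow> snd w | Some i \<Rightarrow> fst w $ i)"

lemma co_sum: "co r (\<Sum>a\<in>A. f a) = (\<Sum>a\<in>A. co r (f a))"
  by (cases r) (simp_all add: co_def fst_sum snd_sum sum_component)
lemma co_scale: "co r (c *\<^sub>R w) = c * co r w"
  by (cases r) (simp_all add: co_def)
lemma co_add: "co r (v + w) = co r v + co r w"
  by (cases r) (simp_all add: co_def)
lemma co_eq0: "(\<And>r. co r w = 0) \<Longrightarrow> w = 0"
proof -
  assume a: "\<And>r. co r w = 0"
  have "fst w = 0" using a[of "Some _"] by (simp add: co_def vec_eq_iff)
  moreover have "snd w = 0" using a[of None] by (simp add: co_def)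
  ultimately show ?thesis by (simp add: prod_eq_iff)
qed
lemma bl_co: "bounded_linear (co r)"
proof (cases r)
  case None
  have "co r = snd" by (simp add: fun_eq_iff co_def None)
  then show ?thesis by (simp add: bounded_linear_snd)
next
  case (Some i)
  have "co r = (\<lambda>v. v $ i) \<circ> fst" by (simp add: fun_eq_iff co_def Some)
  then show ?thesis using bounded_linear_compose[OF bounded_linear_vec_nth bounded_linear_fst] by (simp add: o_def)
qed

lemma sum_option: "(\<Sum>c\<in>(UNIV::'n::finite option set). f c) = f None + (\<Sum>k\<in>UNIV. f (Some k))"
proof -
  have "(\<Sum>c\<in>(UNIV::'n option set). f c) = (\<Sum>c\<in>insert None (range Some). f c)"
    by (simp add: UNIV_option_conv)
  also have "\<dots> = f None + (\<Sum>c\<in>range Some. f c)" by (rule sum.insert) auto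
  also have "(\<Sum>c\<in>range Some. f c) = (\<Sum>k\<in>UNIV. f (Some k))"
    by (simp add: sum.reindex)
  finally show ?thesis .
qed

lemma sum3_swap: "(\<Sum>j\<in>A. \<Sum>i\<in>B. \<Sum>k\<in>C. f i j k) = (\<Sum>k\<in>C. \<Sum>i\<in>B. \<Sum>j\<in>A. f i j k)"
proof -
  have "(\<Sum>j\<in>A. \<Sum>i\<in>B. \<Sum>k\<in>C. f i j k) = (\<Sum>j\<in>A. \<Sum>k\<in>C. \<Sum>i\<in>B. f i j k)"
    by (rule sum.cong[OF refl]) (rule sum.swap)
  also have "\<dots> = (\<Sum>k\<in>C. \<Sum>j\<in>A. \<Sum>i\<in>B. f i j k)" by (rule sum.swap)
  also have "\<dots> = (\<Sum>k\<in>C. \<Sum>i\<in>B. \<Sum>j\<in>A. f i j k)"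
    by (rule sum.cong[OF refl]) (rule sum.swap)
  finally show ?thesis .
qed

locale chs =
  fixes U :: "(real^'n::finite) set" and x :: "real^'n \<Rightarrow> (real^'n) \<times> real" and eps :: real
    and G :: "'n \<Rightarrow> 'n \<Rightarrow> 'n \<Rightarrow> real^'n \<Rightarrow> real" and h :: "'n \<Rightarrow> 'n \<Rightarrow> real^'n \<Rightarrow> real"
  assumes hyp: "centroaffine_hypersurface U x eps G h"
    and convex: "positive_definite_on U h"
begin

lemma U_open: "open U" using hyp unfolding centroaffine_hypersurface_def by blast
lemma x_smooth: "smooth_on U x" using hyp unfolding centroaffine_hypersurface_def by blast
lemma eps_cases: "eps = 1 \<or> eps = -1" using hyp unfolding centroaffine_hypersurface_def by blast
lemma eps_ne: "eps \<noteq> 0" using eps_cases by auto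
lemma struct: "u \<in> U \<Longrightarrow> pd i (pd j x) u = (\<Sum>k\<in>UNIV. G k i j u *\<^sub>R pd k x u) + (h i j u * - eps) *\<^sub>R x u"
  using hyp unfolding centroaffine_hypersurface_def by blast
lemma indep: "u \<in> U \<Longrightarrow> independent (insert (x u) (range (\<lambda>i. pd i x u)))"
  using hyp unfolding centroaffine_hypersurface_def by blast
lemma notin: "u \<in> U \<Longrightarrow> x u \<notin> range (\<lambda>i. pd i x u)"
  using hyp unfolding centroaffine_hypersurface_def by blast
lemma injE: "u \<in> U \<Longrightarrow> inj (\<lambda>i. pd i x u)"
  using hyp unfolding centroaffine_hypersurface_def by blast

definition xs :: "real^'n \<Rightarrow> real^'n \<Rightarrow> (real^'n) \<times> real" where
  "xs u v = (\<Sum>k\<in>UNIV. v$k *\<^sub>R pd k x u)"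

lemma IND:
  assumes u: "u \<in> U" and e: "xs u v + c *\<^sub>R x u = 0"
  shows "v = 0" "c = 0"
proof -
  let ?E = "\<lambda>i. pd i x u"
  let ?S = "insert (x u) (range ?E)"
  have ind: "independent ?S" by (rule indep[OF u])
  have nx: "x u \<notin> range ?E" by (rule notin[OF u])
  have inj: "inj ?E" by (rule injE[OF u])
  define cf where "cf w = (if w = x u then c else v $ (inv ?E w))" for w
  have cfE: "cf (?E i) = v $ i" for i
  proof -
    have "?E i \<noteq> x u" using nx by (metis rangeI)
    then show ?thesis by (simp add: cf_def inv_f_f[OF inj])
  qed
  have "(\<Sum>w\<in>?S. cf w *\<^sub>R w) = cf (x u) *\<^sub>R x u + (\<Sum>w\<in>range ?E. cf w *\<^sub>R w)"
    using nx by (simp add: sum.insert)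
  also have "(\<Sum>w\<in>range ?E. cf w *\<^sub>R w) = (\<Sum>i\<in>UNIV. cf (?E i) *\<^sub>R ?E i)"
    by (simp add: sum.reindex[OF inj])
  also have "\<dots> = xs u v" unfolding cfE xs_def ..
  finally have "(\<Sum>w\<in>?S. cf w *\<^sub>R w) = 0" using e by (simp add: cf_def add.commute)
  then have z: "\<forall>w\<in>?S. cf w = 0" using ind unfolding independent_explicit by blast
  show "c = 0" using z by (simp add: cf_def)
  show "v = 0" using z cfE by (simp add: vec_eq_iff)
qed

definition col :: "real^'n \<Rightarrow> 'n option \<Rightarrow> (real^'n) \<times> real" where
  "col u c = (case c of None \<Rightarrow> x u | Some k \<Rightarrow> pd k x u)"
definition Fm :: "real^'n \<Rightarrow> real^('n option)^('n option)" where
  "Fm u = (\<chi> r c. co r (col u c))"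

lemma Fm_mult: "Fm u *v y = (\<chi> r. co r (\<Sum>c\<in>UNIV. y$c *\<^sub>R col u c))"
  by (simp add: Fm_def matrix_vector_mult_def co_sum co_scale mult.commute vec_eq_iff)

lemma Fm_det: assumes u: "u \<in> U" shows "det (Fm u) \<noteq> 0"
proof -
  have "invertible (Fm u)"
  proof (rule invertible_if_ker)
    fix y assume "Fm u *v y = 0"
    then have "\<And>r. co r (\<Sum>c\<in>UNIV. y$c *\<^sub>R col u c) = 0"
      unfolding Fm_mult by (simp add: vec_eq_iff)
    then have w0: "(\<Sum>c\<in>UNIV. y$c *\<^sub>R col u c) = 0" by (rule co_eq0)
    have "(\<Sum>c\<in>UNIV. y$c *\<^sub>R col u c) = xs u (\<chi> k. y $ Some k) + y$None *\<^sub>R x u"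
      by (simp add: sum_option col_def xs_def add.commute)
    then have e: "xs u (\<chi> k. y $ Some k) + y$None *\<^sub>R x u = 0" using w0 by simp
    have a: "(\<chi> k. y $ Some k) = 0" by (rule IND(1)[OF u e])
    have b: "y $ None = 0" by (rule IND(2)[OF u e])
    show "y = 0"
    proof (subst vec_eq_iff, rule allI)
      fix c show "y $ c = 0 $ c"
        using a b by (cases c) (simp_all add: vec_eq_iff)
    qed
  qed
  then show ?thesis unfolding invertible_det_nz .
qed

lemma Fm_smooth: "smooth_on U (\<lambda>u. Fm u $ r $ c)"
proof (cases c)
  case None then show ?thesis
    by (simp add: Fm_def col_def smooth_linear[OF U_open bl_co x_smooth])
next
  case (Some k) then show ?thesis
    by (simp add: Fm_def col_def smooth_linear[OF U_open bl_co smooth_pd[OF x_smooth]])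
qed

lemma Fm_eq:
  assumes u: "u \<in> U"
  shows "Fm u *v (\<chi> c. case c of None \<Rightarrow> h i j u * - eps | Some k \<Rightarrow> G k i j u) = (\<chi> r. co r (pd i (pd j x) u))"
  unfolding Fm_mult struct[OF u] by (simp add: sum_option col_def add.commute)

lemma G_smooth: "smooth_on U (G k i j)"
proof -
  have "smooth_on U (\<lambda>u. (\<chi> c. case c of None \<Rightarrow> h i j u * - eps | Some k \<Rightarrow> G k i j u) $ Some k)"
    apply (rule smooth_cramer[OF U_open Fm_smooth])
      prefer 3 apply (erule Fm_eq)
     apply (simp add: smooth_linear[OF U_open bl_co smooth_pd[OF smooth_pd[OF x_smooth]]])
    apply (erule Fm_det)
    done
  then show ?thesis by simp
qed

lemma h_smooth: "smooth_on U (h i j)"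
proof -
  have "smooth_on U (\<lambda>u. (\<chi> c. case c of None \<Rightarrow> h i j u * - eps | Some k \<Rightarrow> G k i j u) $ None)"
    apply (rule smooth_cramer[OF U_open Fm_smooth])
      prefer 3 apply (erule Fm_eq)
     apply (simp add: smooth_linear[OF U_open bl_co smooth_pd[OF smooth_pd[OF x_smooth]]])
    apply (erule Fm_det)
    done
  then have a: "smooth_on U (\<lambda>u. h i j u * - eps)" by simp
  have b: "smooth_on U (\<lambda>u. (h i j u * - eps) * (- 1 / eps))"
    by (rule smooth_mult[OF U_open a smooth_const])
  have c: "(\<lambda>u. (h i j u * - eps) * (- 1 / eps)) = h i j" using eps_ne by (simp add: fun_eq_iff)
  show ?thesis using b unfolding c .
qed

lemma sym_hG:
  assumes u: "u \<in> U"
  shows "h i j u = h j i u" "G k i j u = G k j i u"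
proof -
  have "pd i (pd j x) u = pd j (pd i x) u" by (rule schwarz_eucl[OF U_open x_smooth u])
  then have "(\<Sum>k\<in>UNIV. G k i j u *\<^sub>R pd k x u) + (h i j u * - eps) *\<^sub>R x u
      = (\<Sum>k\<in>UNIV. G k j i u *\<^sub>R pd k x u) + (h j i u * - eps) *\<^sub>R x u"
    using struct[OF u] by simp
  then have e: "xs u (\<chi> k. G k i j u - G k j i u) + ((h i j u - h j i u) * - eps) *\<^sub>R x u = 0"
    by (simp add: xs_def scaleR_diff_left sum_subtractf algebra_simps)
  show "h i j u = h j i u" using IND(2)[OF u e] eps_ne by simp
  show "G k i j u = G k j i u" using IND(1)[OF u e] by (simp add: vec_eq_iff)
qed

end

lemma hform_add1: "hform h u (X + X') Y = hform h u X Y + hform h u X' Y"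
  by (simp add: hform_def distrib_right sum.distrib)
lemma hform_add2: "hform h u X (Y + Y') = hform h u X Y + hform h u X Y'"
  by (simp add: hform_def distrib_right distrib_left sum.distrib)
lemma hform_diff1: "hform h u (X - X') Y = hform h u X Y - hform h u X' Y"
  by (simp add: hform_def left_diff_distrib sum_subtractf)
lemma hform_diff2: "hform h u X (Y - Y') = hform h u X Y - hform h u X Y'"
  by (simp add: hform_def left_diff_distrib right_diff_distrib sum_subtractf)
lemma hform_scale1: "hform h u (c *\<^sub>R X) Y = c * hform h u X Y"
  by (simp add: hform_def sum_distrib_left mult_ac)
lemma hform_scale2: "hform h u X (c *\<^sub>R Y) = c * hform h u X Y"
  by (simp add: hform_def sum_distrib_left mult_ac)

lemma bil_axis2: "bil \<Gamma> u X (axis k 1) = (\<chi> l. \<Sum>i\<in>UNIV. X$i * \<Gamma> l i k u)"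
proof -
  have "X$i * (axis k 1::real^'a) $ j * \<Gamma> l i j u = (if j = k then X$i * \<Gamma> l i k u else 0)" for i j l
    by (simp add: axis_def)
  then show ?thesis by (simp add: bil_def vec_eq_iff)
qed
lemma hform_axis2: "hform h u X (axis k 1) = (\<Sum>i\<in>UNIV. X$i * h i k u)"
proof -
  have "X$i * (axis k 1::real^'a) $ j * h i j u = (if j = k then X$i * h i k u else 0)" for i j
    by (simp add: axis_def)
  then show ?thesis by (simp add: hform_def)
qed

lemma bil_expand2: "bil \<Gamma> u X Y = (\<Sum>k\<in>UNIV. Y$k *\<^sub>R bil \<Gamma> u X (axis k 1))"
proof -
  have "(\<Sum>k\<in>UNIV. \<Sum>m\<in>UNIV. X$k * Y$m * \<Gamma> l k m u) = (\<Sum>m\<in>UNIV. \<Sum>k\<in>UNIV. Y$m * (X$k * \<Gamma> l k m u))" for l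
    by (subst sum.swap) (simp add: mult_ac)
  then show ?thesis unfolding bil_axis2 by (simp add: bil_def vec_eq_iff sum_component sum_distrib_left)
qed

lemma hform_expand2: "hform h u X Y = (\<Sum>k\<in>UNIV. Y$k * hform h u X (axis k 1))"
proof -
  have "(\<Sum>k\<in>UNIV. \<Sum>m\<in>UNIV. X$k * Y$m * h k m u) = (\<Sum>m\<in>UNIV. \<Sum>k\<in>UNIV. Y$m * (X$k * h k m u))"
    by (subst sum.swap) (simp add: mult_ac)
  then show ?thesis unfolding hform_axis2 by (simp add: hform_def sum_distrib_left)
qed

lemma dir_cmult: "f differentiable (at u) \<Longrightarrow> dir W (\<lambda>u. c * f u) u = c * (dir W f u :: real)"
  using dir_mult[of "\<lambda>u. c" u f W] by (simp add: dir_const)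

lemma dir_hform_const:
  assumes H: "\<And>i j. h i j differentiable (at u)"
  shows "dir W (\<lambda>u. hform h u X Y) u = hform (\<lambda>i j u. dir W (h i j) u) u X Y"
proof -
  have d1: "(\<lambda>u. X$i * Y$j * h i j u) differentiable (at u)" for i j
    using H by (intro differentiable_mult differentiable_const)
  have d2: "(\<lambda>u. \<Sum>j\<in>UNIV. X$i * Y$j * h i j u) differentiable (at u)" for i
    using d1 by (intro differentiable_sum) auto
  show ?thesis unfolding hform_def
    using d1 d2 H by (simp add: dir_sum dir_cmult)
qed

lemma smooth_hform:
  assumes U: "open U" and H: "\<And>i j. smooth_on U (h i j)" and X: "smooth_on U X" and Y: "smooth_on U Y"
  shows "smooth_on U (\<lambda>u. hform h u (X u) (Y u))"
  unfolding hform_def by (intro smooth_sum smooth_mult smooth_nth U H X Y) auto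

context chs
begin

lemma xs_add: "xs u (a + b) = xs u a + xs u b"
  by (simp add: xs_def scaleR_add_left sum.distrib)
lemma xs_diff: "xs u (a - b) = xs u a - xs u b"
  by (simp add: xs_def scaleR_diff_left sum_subtractf)
lemma xs_scale: "xs u (c *\<^sub>R a) = c *\<^sub>R xs u a"
  by (simp add: xs_def scaleR_sum_right)
lemma xs_sum: "xs u (\<Sum>k\<in>A. f k) = (\<Sum>k\<in>A. xs u (f k))"
  by (simp add: xs_def scaleR_sum_left sum_component) (rule sum.swap)

lemma dir_x: "u \<in> U \<Longrightarrow> dir W x u = xs u W"
  by (simp add: dir_linW smooth_diff_at[OF x_smooth U_open] xs_def)

lemma ddx:
  assumes u: "u \<in> U"
  shows "dir W (dir Z x) u = xs u (bil G u W Z) + (- eps * hform h u W Z) *\<^sub>R x u"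
proof -
  have "dir W (dir Z x) u = (\<Sum>j\<in>UNIV. \<Sum>i\<in>UNIV. (W$i * Z$j) *\<^sub>R pd i (pd j x) u)"
    using dir_dir_expand[OF U_open x_smooth u] by simp
  also have "\<dots> = (\<Sum>j\<in>UNIV. \<Sum>i\<in>UNIV. (\<Sum>k\<in>UNIV. (W$i * Z$j * G k i j u) *\<^sub>R pd k x u)
                  + (W$i * Z$j * h i j u * - eps) *\<^sub>R x u)"
    by (simp add: struct[OF u] scaleR_add_right scaleR_diff_right scaleR_sum_right mult.assoc)
  also have "\<dots> = (\<Sum>j\<in>UNIV. \<Sum>i\<in>UNIV. \<Sum>k\<in>UNIV. (W$i * Z$j * G k i j u) *\<^sub>R pd k x u)
                  + (\<Sum>j\<in>UNIV. \<Sum>i\<in>UNIV. (W$i * Z$j * h i j u * - eps) *\<^sub>R x u)"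
    by (simp only: sum.distrib)
  also have "(\<Sum>j\<in>UNIV. \<Sum>i\<in>UNIV. \<Sum>k\<in>UNIV. (W$i * Z$j * G k i j u) *\<^sub>R pd k x u)
      = (\<Sum>k\<in>UNIV. \<Sum>i\<in>UNIV. \<Sum>j\<in>UNIV. (W$i * Z$j * G k i j u) *\<^sub>R pd k x u)"
    by (rule sum3_swap)
  also have "\<dots> = xs u (bil G u W Z)"
    by (simp add: xs_def bil_def scaleR_sum_left)
  also have "(\<Sum>j\<in>UNIV. \<Sum>i\<in>UNIV. (W$i * Z$j * h i j u * - eps) *\<^sub>R x u) = (- eps * hform h u W Z) *\<^sub>R x u"
  proof -
    have sc: "(\<Sum>j\<in>UNIV. \<Sum>i\<in>UNIV. W$i * Z$j * h i j u * - eps) = - eps * hform h u W Z"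
      unfolding hform_def by (subst sum.swap) (simp add: sum_distrib_left mult_ac)
    show ?thesis by (simp only: scaleR_sum_left[symmetric] sc)
  qed
  finally show ?thesis .
qed

definition me :: real where "me = - eps"

lemma ddx': "u \<in> U \<Longrightarrow> dir W (dir Z x) u = xs u (bil G u W Z) + (me * hform h u W Z) *\<^sub>R x u"
  unfolding me_def by (rule ddx)

lemma smooth_xs: "smooth_on U F \<Longrightarrow> smooth_on U (\<lambda>u. xs u (F u))"
  unfolding xs_def by (intro smooth_sum smooth_scaleR smooth_nth U_open smooth_pd x_smooth) auto

lemma dir_xs:
  assumes F: "smooth_on U F" and u: "u \<in> U"
  shows "dir W (\<lambda>u. xs u (F u)) u = xs u (nab G W F u) + (me * hform h u W (F u)) *\<^sub>R x u"
proof -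
  have Fd: "F differentiable (at u)" by (rule smooth_diff_at[OF F U_open u])
  have Fk: "(\<lambda>u. F u $ k) differentiable (at u)" for k by (rule diff_nth[OF Fd])
  have Ek: "pd k x differentiable (at u)" for k by (rule smooth_diff_at[OF smooth_pd[OF x_smooth] U_open u])
  have pdk: "pd k x = dir (axis k 1) x" for k by (simp add: fun_eq_iff pd_dir)
  have "dir W (\<lambda>u. xs u (F u)) u = (\<Sum>k\<in>UNIV. dir W (\<lambda>u. F u $ k *\<^sub>R pd k x u) u)"
    unfolding xs_def using Fk Ek by (intro dir_sum) (auto intro: differentiable_scaleR)
  also have "\<dots> = (\<Sum>k\<in>UNIV. dir W F u $ k *\<^sub>R pd k x u + F u $ k *\<^sub>R dir W (dir (axis k 1) x) u)"
    using Fk Ek by (simp add: dir_scaleR dir_nth[OF Fd] pdk)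
  also have "\<dots> = (\<Sum>k\<in>UNIV. dir W F u $ k *\<^sub>R pd k x u) + (\<Sum>k\<in>UNIV. F u $ k *\<^sub>R dir W (dir (axis k 1) x) u)"
    by (simp only: sum.distrib)
  also have "(\<Sum>k\<in>UNIV. dir W F u $ k *\<^sub>R pd k x u) = xs u (dir W F u)" by (simp only: xs_def)
  also have "(\<Sum>k\<in>UNIV. F u $ k *\<^sub>R dir W (dir (axis k 1) x) u)
      = (\<Sum>k\<in>UNIV. F u $ k *\<^sub>R (xs u (bil G u W (axis k 1)) + (me * hform h u W (axis k 1)) *\<^sub>R x u))"
    by (simp only: ddx'[OF u])
  also have "\<dots> = (\<Sum>k\<in>UNIV. F u $ k *\<^sub>R xs u (bil G u W (axis k 1))) + (\<Sum>k\<in>UNIV. (F u $ k * (me * hform h u W (axis k 1))) *\<^sub>R x u)"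
    by (simp only: scaleR_add_right scaleR_scaleR sum.distrib)
  also have "(\<Sum>k\<in>UNIV. F u $ k *\<^sub>R xs u (bil G u W (axis k 1))) = xs u (bil G u W (F u))"
    by (simp only: xs_sum[symmetric] xs_scale[symmetric] bil_expand2[symmetric])
  also have "(\<Sum>k\<in>UNIV. (F u $ k * (me * hform h u W (axis k 1))) *\<^sub>R x u) = (me * hform h u W (F u)) *\<^sub>R x u"
  proof -
    have "(\<Sum>k\<in>UNIV. F u $ k * (me * hform h u W (axis k 1))) = me * hform h u W (F u)"
      by (simp add: hform_expand2[of h u W "F u"] sum_distrib_left mult_ac)
    then show ?thesis by (simp only: scaleR_sum_left[symmetric])
  qed
  finally show ?thesis by (simp add: nab_def xs_add)
qed

end

lemma nab_const: "nab \<Gamma> W (\<lambda>v. V) u = bil \<Gamma> u W V"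
  by (simp add: nab_def dir_const)

context chs
begin

lemma me_ne: "me \<noteq> 0" using eps_ne by (simp add: me_def)

lemma gauss_codazzi:
  assumes u: "u \<in> U"
  shows "Rm G u A B V = me *\<^sub>R (hform h u A V *\<^sub>R B - hform h u B V *\<^sub>R A)"
    and "hform h u A (bil G u B V) + dir A (\<lambda>v. hform h v B V) u
       = hform h u B (bil G u A V) + dir B (\<lambda>v. hform h v A V) u"
proof -
  let ?f = "dir V x"
  have fs: "smooth_on U ?f" by (rule smooth_dir[OF U_open x_smooth])
  let ?N = "\<lambda>W. nab G W (\<lambda>v. V)"
  have Ns: "smooth_on U (?N W)" for W by (rule smooth_nab[OF U_open G_smooth smooth_const])
  have hs: "smooth_on U (\<lambda>v. hform h v W V)" for W
    by (rule smooth_hform[OF U_open h_smooth smooth_const smooth_const])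
  have dd: "dir P (dir Q ?f) u = xs u (nab G P (?N Q) u + (me * hform h u Q V) *\<^sub>R P)
      + (me * hform h u P (?N Q u) + me * dir P (\<lambda>v. hform h v Q V) u) *\<^sub>R x u" for P Q
  proof -
    have "dir P (dir Q ?f) u = dir P (\<lambda>v. xs v (?N Q v) + (me * hform h v Q V) *\<^sub>R x v) u"
      by (rule dir_cong[OF U_open u]) (simp add: ddx' nab_const)
    also have "\<dots> = dir P (\<lambda>v. xs v (?N Q v)) u + dir P (\<lambda>v. (me * hform h v Q V) *\<^sub>R x v) u"
      by (rule dir_add[OF smooth_diff_at[OF smooth_xs[OF Ns] U_open u]
            smooth_diff_at[OF smooth_scaleR[OF U_open smooth_mult[OF U_open smooth_const hs] x_smooth] U_open u]])
    also have "dir P (\<lambda>v. xs v (?N Q v)) u = xs u (nab G P (?N Q) u) + (me * hform h u P (?N Q u)) *\<^sub>R x u"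
      by (rule dir_xs[OF Ns u])
    also have "dir P (\<lambda>v. (me * hform h v Q V) *\<^sub>R x v) u
        = dir P (\<lambda>v. me * hform h v Q V) u *\<^sub>R x u + (me * hform h u Q V) *\<^sub>R dir P x u"
      by (rule dir_scaleR[OF smooth_diff_at[OF smooth_mult[OF U_open smooth_const hs] U_open u]
            smooth_diff_at[OF x_smooth U_open u]])
    also have "dir P (\<lambda>v. me * hform h v Q V) u = me * dir P (\<lambda>v. hform h v Q V) u"
      by (rule dir_cmult[OF smooth_diff_at[OF hs U_open u]])
    finally show ?thesis
      by (simp add: dir_x[OF u] xs_add xs_scale algebra_simps)
  qed
  have sw: "dir A (dir B ?f) u = dir B (dir A ?f) u" by (rule schwarz_dir[OF U_open fs u])
  have e: "xs u ((nab G A (?N B) u + (me * hform h u B V) *\<^sub>R A) - (nab G B (?N A) u + (me * hform h u A V) *\<^sub>R B))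
     + ((me * hform h u A (?N B u) + me * dir A (\<lambda>v. hform h v B V) u)
        - (me * hform h u B (?N A u) + me * dir B (\<lambda>v. hform h v A V) u)) *\<^sub>R x u = 0"
    using sw unfolding dd by (simp add: xs_diff algebra_simps)
  have e1: "nab G A (?N B) u - nab G B (?N A) u = me *\<^sub>R (hform h u A V *\<^sub>R B - hform h u B V *\<^sub>R A)"
    using IND(1)[OF u e] by (simp add: algebra_simps)
  show "Rm G u A B V = me *\<^sub>R (hform h u A V *\<^sub>R B - hform h u B V *\<^sub>R A)"
    using curvature[where \<Gamma>=G and F="\<lambda>v. V" and W=A and Z=B, OF U_open G_smooth smooth_const u] e1 by simp
  have e2: "me * (hform h u A (?N B u) + dir A (\<lambda>v. hform h v B V) u)
      = me * (hform h u B (?N A u) + dir B (\<lambda>v. hform h v A V) u)"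
    using IND(2)[OF u e] by (simp add: algebra_simps)
  then show "hform h u A (bil G u B V) + dir A (\<lambda>v. hform h v B V) u
       = hform h u B (bil G u A V) + dir B (\<lambda>v. hform h v A V) u"
    using me_ne by (simp add: nab_const)
qed

end

lemma sum4_a: "(\<Sum>a\<in>A. \<Sum>b\<in>B. \<Sum>c\<in>C. \<Sum>d\<in>D. f a b c d) = (\<Sum>c\<in>C. \<Sum>d\<in>D. \<Sum>b\<in>B. \<Sum>a\<in>A. f a b c d)"
proof -
  have 1: "(\<Sum>a\<in>A. \<Sum>b\<in>B. \<Sum>c\<in>C. \<Sum>d\<in>D. f a b c d) = (\<Sum>c\<in>C. \<Sum>b\<in>B. \<Sum>a\<in>A. \<Sum>d\<in>D. f a b c d)"
    by (rule sum3_swap)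
  have 2: "(\<Sum>b\<in>B. \<Sum>a\<in>A. \<Sum>d\<in>D. f a b c d) = (\<Sum>d\<in>D. \<Sum>b\<in>B. \<Sum>a\<in>A. f a b c d)" for c
  proof -
    have "(\<Sum>b\<in>B. \<Sum>a\<in>A. \<Sum>d\<in>D. f a b c d) = (\<Sum>d\<in>D. \<Sum>a\<in>A. \<Sum>b\<in>B. f a b c d)" by (rule sum3_swap)
    also have "\<dots> = (\<Sum>d\<in>D. \<Sum>b\<in>B. \<Sum>a\<in>A. f a b c d)" by (rule sum.cong[OF refl]) (rule sum.swap)
    finally show ?thesis .
  qed
  show ?thesis unfolding 1 using 2 by (rule sum.cong[OF refl])
qed

lemma sum4_b: "(\<Sum>a\<in>A. \<Sum>b\<in>B. \<Sum>c\<in>C. \<Sum>d\<in>D. f a b c d) = (\<Sum>c\<in>C. \<Sum>a\<in>A. \<Sum>d\<in>D. \<Sum>b\<in>B. f a b c d)"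
proof -
  have "(\<Sum>a\<in>A. \<Sum>b\<in>B. \<Sum>c\<in>C. \<Sum>d\<in>D. f a b c d) = (\<Sum>a\<in>A. \<Sum>c\<in>C. \<Sum>b\<in>B. \<Sum>d\<in>D. f a b c d)"
    by (rule sum.cong[OF refl]) (rule sum.swap)
  also have "\<dots> = (\<Sum>c\<in>C. \<Sum>a\<in>A. \<Sum>b\<in>B. \<Sum>d\<in>D. f a b c d)" by (rule sum.swap)
  also have "\<dots> = (\<Sum>c\<in>C. \<Sum>a\<in>A. \<Sum>d\<in>D. \<Sum>b\<in>B. f a b c d)"
    by (rule sum.cong[OF refl], rule sum.cong[OF refl]) (rule sum.swap)
  finally show ?thesis .
qed

lemma sum3_c: "(\<Sum>a\<in>A. \<Sum>b\<in>B. \<Sum>c\<in>C. f a b c) = (\<Sum>c\<in>C. \<Sum>a\<in>A. \<Sum>b\<in>B. f a b c)"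
proof -
  have "(\<Sum>a\<in>A. \<Sum>b\<in>B. \<Sum>c\<in>C. f a b c) = (\<Sum>a\<in>A. \<Sum>c\<in>C. \<Sum>b\<in>B. f a b c)"
    by (rule sum.cong[OF refl]) (rule sum.swap)
  also have "\<dots> = (\<Sum>c\<in>C. \<Sum>a\<in>A. \<Sum>b\<in>B. f a b c)" by (rule sum.swap)
  finally show ?thesis .
qed

lemma T1: "hform h u (bil \<Gamma> u W X) Y
   = (\<Sum>k\<in>UNIV. \<Sum>i\<in>UNIV. \<Sum>j\<in>UNIV. W$k * X$i * Y$j * (\<Sum>m\<in>UNIV. \<Gamma> m k i u * h m j u))"
proof -
  have "hform h u (bil \<Gamma> u W X) Y
     = (\<Sum>m\<in>UNIV. \<Sum>j\<in>UNIV. \<Sum>k\<in>UNIV. \<Sum>i\<in>UNIV. W$k * X$i * \<Gamma> m k i u * Y$j * h m j u)"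
    by (simp add: hform_def bil_def sum_distrib_right)
  also have "\<dots> = (\<Sum>k\<in>UNIV. \<Sum>i\<in>UNIV. \<Sum>j\<in>UNIV. \<Sum>m\<in>UNIV. W$k * X$i * \<Gamma> m k i u * Y$j * h m j u)"
    by (rule sum4_a)
  also have "\<dots> = (\<Sum>k\<in>UNIV. \<Sum>i\<in>UNIV. \<Sum>j\<in>UNIV. W$k * X$i * Y$j * (\<Sum>m\<in>UNIV. \<Gamma> m k i u * h m j u))"
    by (simp add: sum_distrib_left mult_ac)
  finally show ?thesis .
qed

lemma T2: "hform h u X (bil \<Gamma> u W Y)
   = (\<Sum>k\<in>UNIV. \<Sum>i\<in>UNIV. \<Sum>j\<in>UNIV. W$k * X$i * Y$j * (\<Sum>m\<in>UNIV. \<Gamma> m k j u * h i m u))"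
proof -
  have "hform h u X (bil \<Gamma> u W Y)
     = (\<Sum>i\<in>UNIV. \<Sum>m\<in>UNIV. \<Sum>k\<in>UNIV. \<Sum>j\<in>UNIV. X$i * (W$k * Y$j * \<Gamma> m k j u) * h i m u)"
    by (simp add: hform_def bil_def sum_distrib_right sum_distrib_left)
  also have "\<dots> = (\<Sum>k\<in>UNIV. \<Sum>i\<in>UNIV. \<Sum>j\<in>UNIV. \<Sum>m\<in>UNIV. X$i * (W$k * Y$j * \<Gamma> m k j u) * h i m u)"
    by (rule sum4_b)
  also have "\<dots> = (\<Sum>k\<in>UNIV. \<Sum>i\<in>UNIV. \<Sum>j\<in>UNIV. W$k * X$i * Y$j * (\<Sum>m\<in>UNIV. \<Gamma> m k j u * h i m u))"
    by (simp add: sum_distrib_left mult_ac)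
  finally show ?thesis .
qed

lemma TL:
  assumes H: "\<And>i j. h i j differentiable (at u)"
  shows "dir W (\<lambda>v. hform h v X Y) u = (\<Sum>k\<in>UNIV. \<Sum>i\<in>UNIV. \<Sum>j\<in>UNIV. W$k * X$i * Y$j * pd k (h i j) u)"
proof -
  have "dir W (\<lambda>v. hform h v X Y) u = (\<Sum>i\<in>UNIV. \<Sum>j\<in>UNIV. X$i * Y$j * dir W (h i j) u)"
    unfolding dir_hform_const[OF H] by (simp add: hform_def)
  also have "\<dots> = (\<Sum>i\<in>UNIV. \<Sum>j\<in>UNIV. \<Sum>k\<in>UNIV. X$i * Y$j * (W$k * pd k (h i j) u))"
    by (simp add: dir_linW[OF H] sum_distrib_left)
  also have "\<dots> = (\<Sum>k\<in>UNIV. \<Sum>i\<in>UNIV. \<Sum>j\<in>UNIV. X$i * Y$j * (W$k * pd k (h i j) u))"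
    by (rule sum3_c)
  also have "\<dots> = (\<Sum>k\<in>UNIV. \<Sum>i\<in>UNIV. \<Sum>j\<in>UNIV. W$k * X$i * Y$j * pd k (h i j) u)"
    by (simp add: mult_ac)
  finally show ?thesis .
qed

lemma bil_sym: "(\<And>l k m. \<Gamma> l k m u = \<Gamma> l m k u) \<Longrightarrow> bil \<Gamma> u X Y = bil \<Gamma> u Y X"
  unfolding bil_def vec_eq_iff
  by (auto simp: mult_ac intro: sum.swap[THEN trans])

context chs
begin

lemma gmat_inv: assumes u: "u \<in> U" shows "invertible (gmat h u)"
proof (rule invertible_if_ker)
  fix y assume y: "gmat h u *v y = 0"
  have "hform h u y y = (\<Sum>i\<in>UNIV. y$i * (gmat h u *v y) $ i)"
    by (simp add: hform_def gmat_def matrix_vector_mult_def sum_distrib_left mult_ac)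
  also have "\<dots> = 0" using y by simp
  finally have "hform h u y y = 0" .
  then show "y = 0" using convex u unfolding positive_definite_on_def by force
qed

lemma ginv_smooth: "smooth_on U (\<lambda>u. matrix_inv (gmat h u) $ k $ l)"
  by (rule smooth_matrix_inv[OF U_open _ gmat_inv]) (simp add: gmat_def h_smooth)

lemma ginv_h: assumes u: "u \<in> U"
  shows "(\<Sum>m\<in>UNIV. matrix_inv (gmat h u) $ m $ l * h m j u) = (if l = j then 1 else 0)"
proof -
  have "(gmat h u ** matrix_inv (gmat h u)) $ j $ l = mat 1 $ j $ l"
    using matrix_inv_props(1)[OF gmat_inv[OF u]] by simp
  then have "(\<Sum>m\<in>UNIV. h j m u * matrix_inv (gmat h u) $ m $ l) = (if j = l then 1 else 0)"
    by (simp add: matrix_matrix_mult_def gmat_def mat_def)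
  then show ?thesis using sym_hG(1)[OF u] by (simp add: mult.commute eq_commute)
qed

lemma christ: assumes u: "u \<in> U"
  shows "(\<Sum>m\<in>UNIV. LC h m k i u * h m j u) = (pd k (h i j) u + pd i (h k j) u - pd j (h k i) u) / 2"
proof -
  define T where "T l = pd k (h i l) u + pd i (h k l) u - pd l (h k i) u" for l
  define g where "g m l = matrix_inv (gmat h u) $ m $ l" for m l
  have "(\<Sum>m\<in>UNIV. LC h m k i u * h m j u) = (\<Sum>m\<in>UNIV. \<Sum>l\<in>UNIV. (1/2) * T l * (g m l * h m j u))"
    by (simp add: LC_def T_def g_def sum_distrib_left sum_distrib_right mult_ac)
  also have "\<dots> = (\<Sum>l\<in>UNIV. \<Sum>m\<in>UNIV. (1/2) * T l * (g m l * h m j u))" by (rule sum.swap)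
  also have "\<dots> = (\<Sum>l\<in>UNIV. (1/2) * T l * (\<Sum>m\<in>UNIV. g m l * h m j u))" by (simp add: sum_distrib_left)
  also have "\<dots> = (\<Sum>l\<in>UNIV. if l = j then (1/2) * T l else 0)"
    unfolding g_def ginv_h[OF u] by (rule sum.cong) auto
  also have "\<dots> = (1/2) * T j" by simp
  finally show ?thesis by (simp add: T_def)
qed

lemma pd_h_sym: "u \<in> U \<Longrightarrow> pd k (h i j) u = pd k (h j i) u"
  by (rule pd_cong[OF U_open]) (auto simp: sym_hG)

lemma metric: assumes u: "u \<in> U"
  shows "dir W (\<lambda>v. hform h v X Y) u = hform h u (bil (LC h) u W X) Y + hform h u X (bil (LC h) u W Y)"
proof -
  have H: "\<And>i j. h i j differentiable (at u)" using smooth_diff_at[OF h_smooth U_open u] .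
  have c: "(\<Sum>m\<in>UNIV. LC h m k i u * h m j u) + (\<Sum>m\<in>UNIV. LC h m k j u * h i m u) = pd k (h i j) u" for k i j
  proof -
    have "(\<Sum>m\<in>UNIV. LC h m k j u * h i m u) = (\<Sum>m\<in>UNIV. LC h m k j u * h m i u)"
      using sym_hG(1)[OF u, of i] by simp
    also have "\<dots> = (pd k (h j i) u + pd j (h k i) u - pd i (h k j) u) / 2" by (rule christ[OF u])
    finally have a: "(\<Sum>m\<in>UNIV. LC h m k j u * h i m u) = (pd k (h j i) u + pd j (h k i) u - pd i (h k j) u) / 2" .
    show ?thesis unfolding christ[OF u, of k i j] a pd_h_sym[OF u, of k j i] by (simp add: field_simps)
  qed
  have c': "(\<Sum>m\<in>UNIV. LC h m k i u * h m j u + LC h m k j u * h i m u) = pd k (h i j) u" for k i j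
    using c[of k i j] by (simp add: sum.distrib)
  show ?thesis
    unfolding TL[OF H] T1 T2 by (simp add: sum.distrib[symmetric] distrib_left[symmetric] c')
qed

lemma LC_sym: "u \<in> U \<Longrightarrow> LC h m k i u = LC h m i k u"
  unfolding LC_def using pd_h_sym[of u _ k i] by (simp add: algebra_simps)

lemma LC_smooth: "smooth_on U (LC h m k i)"
proof -
  have "smooth_on U (\<lambda>u. (1/2) * (\<Sum>l\<in>UNIV. matrix_inv (gmat h u) $ m $ l *
        (pd k (h i l) u + pd i (h k l) u - pd l (h k i) u)))"
    by (intro smooth_mult smooth_const smooth_sum smooth_add smooth_diff smooth_pd h_smooth ginv_smooth U_open) auto
  then show ?thesis by (simp add: LC_def[abs_def])
qed

lemma K_smooth: "smooth_on U (Kc G h l i j)"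
proof -
  have "smooth_on U (\<lambda>u. G l i j u - LC h l i j u)"
    by (rule smooth_diff[OF U_open G_smooth LC_smooth])
  then show ?thesis by (simp add: Kc_def[abs_def])
qed

lemma G_LK: "bil G u X Y = bil (LC h) u X Y + bil (Kc G h) u X Y"
proof -
  have "bil (Kc G h) u X Y = bil G u X Y - bil (LC h) u X Y"
    unfolding Kc_def[abs_def] by (rule bil_arr_diff)
  then show ?thesis by simp
qed

lemma G_symv: "u \<in> U \<Longrightarrow> bil G u X Y = bil G u Y X"
  by (rule bil_sym) (simp add: sym_hG)
lemma L_symv: "u \<in> U \<Longrightarrow> bil (LC h) u X Y = bil (LC h) u Y X"
  by (rule bil_sym) (simp add: LC_sym)
lemma K_symv: "u \<in> U \<Longrightarrow> bil (Kc G h) u X Y = bil (Kc G h) u Y X"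
  using G_LK[of u X Y] G_LK[of u Y X] G_symv[of u X Y] L_symv[of u X Y] by simp

lemma hform_sym: "u \<in> U \<Longrightarrow> hform h u X Y = hform h u Y X"
  unfolding hform_def using sym_hG(1) by (subst sum.swap) (simp add: mult_ac)

end

lemma sum3_d: "(\<Sum>a\<in>A. \<Sum>b\<in>B. \<Sum>c\<in>C. f a b c) = (\<Sum>b\<in>B. \<Sum>c\<in>C. \<Sum>a\<in>A. f a b c)"
proof -
  have "(\<Sum>a\<in>A. \<Sum>b\<in>B. \<Sum>c\<in>C. f a b c) = (\<Sum>b\<in>B. \<Sum>a\<in>A. \<Sum>c\<in>C. f a b c)" by (rule sum.swap)
  also have "\<dots> = (\<Sum>b\<in>B. \<Sum>c\<in>C. \<Sum>a\<in>A. f a b c)" by (rule sum.cong[OF refl]) (rule sum.swap)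
  finally show ?thesis .
qed

lemma C1:
  assumes "\<And>l i j. B l i j differentiable (at u)"
  shows "bil (dar Z B) u x y $ l = (\<Sum>k\<in>UNIV. \<Sum>i\<in>UNIV. \<Sum>j\<in>UNIV. Z$k * x$i * y$j * pd k (B l i j) u)"
proof -
  have "bil (dar Z B) u x y $ l = (\<Sum>i\<in>UNIV. \<Sum>j\<in>UNIV. \<Sum>k\<in>UNIV. x$i * y$j * (Z$k * pd k (B l i j) u))"
    by (simp add: bil_def dar_def dir_linW[OF assms] sum_distrib_left)
  also have "\<dots> = (\<Sum>k\<in>UNIV. \<Sum>i\<in>UNIV. \<Sum>j\<in>UNIV. x$i * y$j * (Z$k * pd k (B l i j) u))" by (rule sum3_c)
  finally show ?thesis by (simp add: mult_ac)
qed

lemma C2: "bil A u Z (bil B u x y) $ l = (\<Sum>k\<in>UNIV. \<Sum>i\<in>UNIV. \<Sum>j\<in>UNIV. Z$k * x$i * y$j * (\<Sum>m\<in>UNIV. A l k m u * B m i j u))"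
proof -
  have "bil A u Z (bil B u x y) $ l = (\<Sum>k\<in>UNIV. \<Sum>m\<in>UNIV. \<Sum>i\<in>UNIV. \<Sum>j\<in>UNIV. Z$k * (x$i * y$j * B m i j u) * A l k m u)"
    by (simp add: bil_def sum_distrib_left sum_distrib_right)
  also have "\<dots> = (\<Sum>k\<in>UNIV. \<Sum>i\<in>UNIV. \<Sum>j\<in>UNIV. \<Sum>m\<in>UNIV. Z$k * (x$i * y$j * B m i j u) * A l k m u)"
    by (rule sum.cong[OF refl]) (rule sum3_d)
  finally show ?thesis by (simp add: sum_distrib_left mult_ac)
qed

lemma C3: "bil B u (bil A u Z x) y $ l = (\<Sum>k\<in>UNIV. \<Sum>i\<in>UNIV. \<Sum>j\<in>UNIV. Z$k * x$i * y$j * (\<Sum>m\<in>UNIV. A m k i u * B l m j u))"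
proof -
  have "bil B u (bil A u Z x) y $ l = (\<Sum>m\<in>UNIV. \<Sum>j\<in>UNIV. \<Sum>k\<in>UNIV. \<Sum>i\<in>UNIV. Z$k * x$i * A m k i u * y$j * B l m j u)"
    by (simp add: bil_def sum_distrib_right)
  also have "\<dots> = (\<Sum>k\<in>UNIV. \<Sum>i\<in>UNIV. \<Sum>j\<in>UNIV. \<Sum>m\<in>UNIV. Z$k * x$i * A m k i u * y$j * B l m j u)"
    by (rule sum4_a)
  finally show ?thesis by (simp add: sum_distrib_left mult_ac)
qed

lemma C4: "bil B u x (bil A u Z y) $ l = (\<Sum>k\<in>UNIV. \<Sum>i\<in>UNIV. \<Sum>j\<in>UNIV. Z$k * x$i * y$j * (\<Sum>m\<in>UNIV. A m k j u * B l i m u))"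
proof -
  have "bil B u x (bil A u Z y) $ l = (\<Sum>i\<in>UNIV. \<Sum>m\<in>UNIV. \<Sum>k\<in>UNIV. \<Sum>j\<in>UNIV. x$i * (Z$k * y$j * A m k j u) * B l i m u)"
    by (simp add: bil_def sum_distrib_right sum_distrib_left)
  also have "\<dots> = (\<Sum>k\<in>UNIV. \<Sum>i\<in>UNIV. \<Sum>j\<in>UNIV. \<Sum>m\<in>UNIV. x$i * (Z$k * y$j * A m k j u) * B l i m u)"
    by (rule sum4_b)
  finally show ?thesis by (simp add: sum_distrib_left mult_ac)
qed

lemma covK_eq:
  assumes "\<And>l i j. Kc G h l i j differentiable (at u)"
  shows "covK G h u Z x y = bil (dar Z (Kc G h)) u x y + bil (LC h) u Z (bil (Kc G h) u x y)
           - bil (Kc G h) u (bil (LC h) u Z x) y - bil (Kc G h) u x (bil (LC h) u Z y)"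
  unfolding vec_eq_iff
proof
  fix l
  show "covK G h u Z x y $ l = (bil (dar Z (Kc G h)) u x y + bil (LC h) u Z (bil (Kc G h) u x y)
           - bil (Kc G h) u (bil (LC h) u Z x) y - bil (Kc G h) u x (bil (LC h) u Z y)) $ l"
  proof -
    have "covK G h u Z x y $ l =
      (((\<Sum>k\<in>UNIV. \<Sum>i\<in>UNIV. \<Sum>j\<in>UNIV. Z$k * x$i * y$j * pd k (Kc G h l i j) u)
      + (\<Sum>k\<in>UNIV. \<Sum>i\<in>UNIV. \<Sum>j\<in>UNIV. Z$k * x$i * y$j * (\<Sum>m\<in>UNIV. LC h l k m u * Kc G h m i j u)))
      - (\<Sum>k\<in>UNIV. \<Sum>i\<in>UNIV. \<Sum>j\<in>UNIV. Z$k * x$i * y$j * (\<Sum>m\<in>UNIV. LC h m k i u * Kc G h l m j u)))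
      - (\<Sum>k\<in>UNIV. \<Sum>i\<in>UNIV. \<Sum>j\<in>UNIV. Z$k * x$i * y$j * (\<Sum>m\<in>UNIV. LC h m k j u * Kc G h l i m u))"
      unfolding covK_def vec_lambda_beta by (simp only: right_diff_distrib distrib_left sum.distrib sum_subtractf)
    then show ?thesis
      unfolding vector_add_component vector_minus_component C1[OF assms]
        C2[where A="LC h" and B="Kc G h"] C3[where A="LC h" and B="Kc G h"] C4[where A="LC h" and B="Kc G h"] .
  qed
qed

context chs
begin

lemma Kd: "u \<in> U \<Longrightarrow> Kc G h l i j differentiable (at u)"
  by (rule smooth_diff_at[OF K_smooth U_open])
lemma Ld: "u \<in> U \<Longrightarrow> LC h l i j differentiable (at u)"
  by (rule smooth_diff_at[OF LC_smooth U_open])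

lemma leib:
  assumes X: "smooth_on U X" and Y: "smooth_on U Y" and u: "u \<in> U"
  shows "nab (LC h) Z (\<lambda>v. bil (Kc G h) v (X v) (Y v)) u
     = covK G h u Z (X u) (Y u) + bil (Kc G h) u (nab (LC h) Z X u) (Y u) + bil (Kc G h) u (X u) (nab (LC h) Z Y u)"
proof -
  have "dir Z (\<lambda>v. bil (Kc G h) v (X v) (Y v)) u
     = bil (dar Z (Kc G h)) u (X u) (Y u) + bil (Kc G h) u (dir Z X u) (Y u) + bil (Kc G h) u (X u) (dir Z Y u)"
    by (rule dir_bil[OF Kd[OF u] smooth_diff_at[OF X U_open u] smooth_diff_at[OF Y U_open u]])
  then show ?thesis
    unfolding nab_def covK_eq[OF Kd[OF u]] by (simp add: bil_add1 bil_add2 algebra_simps)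
qed

end

definition Sv :: "('n::finite \<Rightarrow> 'n \<Rightarrow> real^'n \<Rightarrow> real) \<Rightarrow> real^'n \<Rightarrow> real^'n \<Rightarrow> real^'n \<Rightarrow> real^'n \<Rightarrow> real^'n" where
  "Sv h u Z X Y = hform h u X Y *\<^sub>R Z + hform h u X Z *\<^sub>R Y + hform h u Y Z *\<^sub>R X"

lemma nab_add: "F differentiable (at u) \<Longrightarrow> H differentiable (at u) \<Longrightarrow>
  nab \<Gamma> W (\<lambda>v. F v + H v) u = nab \<Gamma> W F u + nab \<Gamma> W H u"
  by (simp add: nab_def dir_add bil_add2)

lemma nab_scaleR: "f differentiable (at u) \<Longrightarrow> F differentiable (at u) \<Longrightarrow>
  nab \<Gamma> W (\<lambda>v. f v *\<^sub>R F v) u = dir W f u *\<^sub>R F u + f u *\<^sub>R nab \<Gamma> W F u"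
  by (simp add: nab_def dir_scaleR bil_scale2 scaleR_add_right)

lemma nab_cong: "open U \<Longrightarrow> u \<in> U \<Longrightarrow> (\<And>v. v \<in> U \<Longrightarrow> F v = H v) \<Longrightarrow> nab \<Gamma> W F u = nab \<Gamma> W H u"
  unfolding nab_def using dir_cong[of U u F H W] by simp

locale chs_mu = chs U x eps G h
  for U :: "(real^'n::finite) set" and x eps G h +
  fixes mu :: "real^'n \<Rightarrow> real"
  assumes mu_smooth: "smooth_on U mu"
    and mu_eq: "\<forall>u\<in>U. \<forall>X Y Z. covK G h u Z X Y =
        mu u *\<^sub>R (hform h u X Y *\<^sub>R Z + hform h u X Z *\<^sub>R Y + hform h u Y Z *\<^sub>R X)"
begin

lemma covK_mu: "u \<in> U \<Longrightarrow> covK G h u Z X Y = mu u *\<^sub>R Sv h u Z X Y"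
  using mu_eq unfolding Sv_def by blast

lemma Sv_smooth: "smooth_on U (\<lambda>v. Sv h v Z X Y)"
  unfolding Sv_def
  by (intro smooth_add smooth_scaleR smooth_hform smooth_const h_smooth U_open)

lemma NS: assumes u: "u \<in> U"
  shows "nab (LC h) W (\<lambda>v. Sv h v Z X Y) u
   = Sv h u (bil (LC h) u W Z) X Y + Sv h u Z (bil (LC h) u W X) Y + Sv h u Z X (bil (LC h) u W Y)"
proof -
  have hs: "smooth_on U (\<lambda>v. hform h v A B)" for A B
    by (rule smooth_hform[OF U_open h_smooth smooth_const smooth_const])
  have hd: "(\<lambda>v. hform h v A B) differentiable (at u)" for A B
    by (rule smooth_diff_at[OF hs U_open u])
  have t: "nab (LC h) W (\<lambda>v. hform h v A B *\<^sub>R C) u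
      = (hform h u (bil (LC h) u W A) B + hform h u A (bil (LC h) u W B)) *\<^sub>R C + hform h u A B *\<^sub>R bil (LC h) u W C" for A B C
    using nab_scaleR[OF hd differentiable_const, of "LC h" W A B C] metric[OF u, of W A B]
    by (simp add: nab_const)
  have "nab (LC h) W (\<lambda>v. Sv h v Z X Y) u
      = nab (LC h) W (\<lambda>v. hform h v X Y *\<^sub>R Z) u + nab (LC h) W (\<lambda>v. hform h v X Z *\<^sub>R Y) u
        + nab (LC h) W (\<lambda>v. hform h v Y Z *\<^sub>R X) u"
    unfolding Sv_def
    by (subst nab_add, (intro differentiable_add differentiable_scaleR hd differentiable_const)+)
       (subst nab_add, (intro hd differentiable_scaleR differentiable_const)+, simp)
  then show ?thesis unfolding t Sv_def
    by (simp add: hform_add1 hform_add2 hform_scale1 hform_scale2 hform_sym[OF u, of Z] algebra_simps)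
qed

lemma Ks: "smooth_on U (Kc G h l i j)" by (rule K_smooth)
lemma Ls: "smooth_on U (LC h l i j)" by (rule LC_smooth)

lemma nab_E:
  assumes u: "u \<in> U"
  shows "nab (LC h) B (\<lambda>v. mu v *\<^sub>R Sv h v A X Y + bil (Kc G h) v (bil (LC h) v A X) Y + bil (Kc G h) v X (bil (LC h) v A Y)) u
    = dir B mu u *\<^sub>R Sv h u A X Y
      + mu u *\<^sub>R (Sv h u (bil (LC h) u B A) X Y + Sv h u A (bil (LC h) u B X) Y + Sv h u A X (bil (LC h) u B Y))
      + (mu u *\<^sub>R Sv h u B (bil (LC h) u A X) Y + bil (Kc G h) u (nab (LC h) B (nab (LC h) A (\<lambda>v. X)) u) Y
         + bil (Kc G h) u (bil (LC h) u A X) (bil (LC h) u B Y))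
      + (mu u *\<^sub>R Sv h u B X (bil (LC h) u A Y) + bil (Kc G h) u (bil (LC h) u B X) (bil (LC h) u A Y)
         + bil (Kc G h) u X (nab (LC h) B (nab (LC h) A (\<lambda>v. Y)) u))"
proof -
  have LA: "nab (LC h) A (\<lambda>v. C) = (\<lambda>v. bil (LC h) v A C)" for C by (simp add: fun_eq_iff nab_const)
  have LAs: "smooth_on U (\<lambda>v. bil (LC h) v A C)" for C
    by (rule smooth_bil[OF U_open Ls smooth_const smooth_const])
  have s1: "smooth_on U (\<lambda>v. mu v *\<^sub>R Sv h v A X Y)" by (rule smooth_scaleR[OF U_open mu_smooth Sv_smooth])
  have s2: "smooth_on U (\<lambda>v. bil (Kc G h) v (bil (LC h) v A X) Y)" by (rule smooth_bil[OF U_open Ks LAs smooth_const])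
  have s3: "smooth_on U (\<lambda>v. bil (Kc G h) v X (bil (LC h) v A Y))" by (rule smooth_bil[OF U_open Ks smooth_const LAs])
  have d: "\<And>f. smooth_on U f \<Longrightarrow> f differentiable (at u)" using smooth_diff_at[OF _ U_open u] .
  have "nab (LC h) B (\<lambda>v. mu v *\<^sub>R Sv h v A X Y + bil (Kc G h) v (bil (LC h) v A X) Y + bil (Kc G h) v X (bil (LC h) v A Y)) u
     = nab (LC h) B (\<lambda>v. mu v *\<^sub>R Sv h v A X Y) u + nab (LC h) B (\<lambda>v. bil (Kc G h) v (bil (LC h) v A X) Y) u
       + nab (LC h) B (\<lambda>v. bil (Kc G h) v X (bil (LC h) v A Y)) u"
    using nab_add[OF d[OF smooth_add[OF U_open s1 s2]] d[OF s3]] nab_add[OF d[OF s1] d[OF s2]] by simp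
  also have "nab (LC h) B (\<lambda>v. mu v *\<^sub>R Sv h v A X Y) u
     = dir B mu u *\<^sub>R Sv h u A X Y
      + mu u *\<^sub>R (Sv h u (bil (LC h) u B A) X Y + Sv h u A (bil (LC h) u B X) Y + Sv h u A X (bil (LC h) u B Y))"
    using nab_scaleR[OF d[OF mu_smooth] d[OF Sv_smooth]] NS[OF u] by simp
  also have "nab (LC h) B (\<lambda>v. bil (Kc G h) v (bil (LC h) v A X) Y) u
     = mu u *\<^sub>R Sv h u B (bil (LC h) u A X) Y + bil (Kc G h) u (nab (LC h) B (nab (LC h) A (\<lambda>v. X)) u) Y
         + bil (Kc G h) u (bil (LC h) u A X) (bil (LC h) u B Y)"
    using leib[where Z=B, OF LAs smooth_const u] covK_mu[OF u] unfolding LA by (simp add: nab_const)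
  also have "nab (LC h) B (\<lambda>v. bil (Kc G h) v X (bil (LC h) v A Y)) u
     = mu u *\<^sub>R Sv h u B X (bil (LC h) u A Y) + bil (Kc G h) u (bil (LC h) u B X) (bil (LC h) u A Y)
         + bil (Kc G h) u X (nab (LC h) B (nab (LC h) A (\<lambda>v. Y)) u)"
    using leib[where Z=B, OF smooth_const LAs u] covK_mu[OF u] unfolding LA by (simp add: nab_const)
  finally show ?thesis .
qed

lemma ricci:
  assumes u: "u \<in> U"
  shows "Rm (LC h) u W Z (bil (Kc G h) u X Y)
    = dir W mu u *\<^sub>R Sv h u Z X Y - dir Z mu u *\<^sub>R Sv h u W X Y
      + bil (Kc G h) u (Rm (LC h) u W Z X) Y + bil (Kc G h) u X (Rm (LC h) u W Z Y)"
proof -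
  define F where "F = (\<lambda>v. bil (Kc G h) v X Y)"
  have Fs: "smooth_on U F" unfolding F_def by (rule smooth_bil[OF U_open Ks smooth_const smooth_const])
  define P where "P A = (\<lambda>v. mu v *\<^sub>R Sv h v A X Y + bil (Kc G h) v (bil (LC h) v A X) Y + bil (Kc G h) v X (bil (LC h) v A Y))" for A
  have NF: "nab (LC h) A F v = P A v" if v: "v \<in> U" for A v
    using leib[where X="\<lambda>v. X" and Y="\<lambda>v. Y" and Z=A, OF smooth_const smooth_const v] covK_mu[OF v]
    unfolding F_def P_def by (simp add: nab_const)
  have st: "nab (LC h) B (nab (LC h) A F) u = nab (LC h) B (P A) u" for A B
    by (rule nab_cong[OF U_open u]) (simp add: NF)
  have c1: "nab (LC h) W (nab (LC h) Z F) u - nab (LC h) Z (nab (LC h) W F) u = Rm (LC h) u W Z (F u)"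
    by (rule curvature[OF U_open Ls Fs u])
  have c2: "nab (LC h) W (nab (LC h) Z (\<lambda>v. X)) u = Rm (LC h) u W Z X + nab (LC h) Z (nab (LC h) W (\<lambda>v. X)) u"
    using curvature[where F="\<lambda>v. X" and W=W and Z=Z, OF U_open Ls smooth_const u] by (simp add: algebra_simps)
  have c3: "nab (LC h) W (nab (LC h) Z (\<lambda>v. Y)) u = Rm (LC h) u W Z Y + nab (LC h) Z (nab (LC h) W (\<lambda>v. Y)) u"
    using curvature[where F="\<lambda>v. Y" and W=W and Z=Z, OF U_open Ls smooth_const u] by (simp add: algebra_simps)
  have sy: "bil (LC h) u Z W = bil (LC h) u W Z" by (rule L_symv[OF u])
  have "Rm (LC h) u W Z (F u) = nab (LC h) W (P Z) u - nab (LC h) Z (P W) u"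
    using c1 st by simp
  also have "\<dots> = dir W mu u *\<^sub>R Sv h u Z X Y - dir Z mu u *\<^sub>R Sv h u W X Y
      + bil (Kc G h) u (Rm (LC h) u W Z X) Y + bil (Kc G h) u X (Rm (LC h) u W Z Y)"
    unfolding P_def nab_E[OF u] c2 c3 sy by (simp add: bil_add1 bil_add2 algebra_simps)
  finally show ?thesis unfolding F_def .
qed

lemma gaussL:
  assumes u: "u \<in> U"
  shows "Rm (LC h) u W Z V = Rm G u W Z V - bil (Kc G h) u W (bil (Kc G h) u Z V) + bil (Kc G h) u Z (bil (Kc G h) u W V)"
proof -
  have GL: "nab G A F v = nab (LC h) A F v + bil (Kc G h) v A (F v)" for A F v
    by (simp add: nab_def G_LK)
  have NA: "nab G A (\<lambda>v. V) = (\<lambda>v. bil (LC h) v A V + bil (Kc G h) v A V)" for A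
    by (simp add: fun_eq_iff nab_const G_LK)
  have LAs: "smooth_on U (\<lambda>v. bil (LC h) v A V)" for A
    by (rule smooth_bil[OF U_open Ls smooth_const smooth_const])
  have KAs: "smooth_on U (\<lambda>v. bil (Kc G h) v A V)" for A
    by (rule smooth_bil[OF U_open Ks smooth_const smooth_const])
  have d: "\<And>f. smooth_on U f \<Longrightarrow> f differentiable (at u)" using smooth_diff_at[OF _ U_open u] .
  have LA: "nab (LC h) A (\<lambda>v. C) = (\<lambda>v. bil (LC h) v A C)" for C A by (simp add: fun_eq_iff nab_const)
  have e: "nab G B (nab G A (\<lambda>v. V)) u
     = nab (LC h) B (nab (LC h) A (\<lambda>v. V)) u + (mu u *\<^sub>R Sv h u B A V + bil (Kc G h) u (bil (LC h) u B A) V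
        + bil (Kc G h) u A (bil (LC h) u B V))
       + bil (Kc G h) u B (bil (LC h) u A V + bil (Kc G h) u A V)" for A B
  proof -
    have "nab G B (nab G A (\<lambda>v. V)) u = nab (LC h) B (\<lambda>v. bil (LC h) v A V + bil (Kc G h) v A V) u
         + bil (Kc G h) u B (bil (LC h) u A V + bil (Kc G h) u A V)"
      unfolding NA GL ..
    also have "nab (LC h) B (\<lambda>v. bil (LC h) v A V + bil (Kc G h) v A V) u
        = nab (LC h) B (\<lambda>v. bil (LC h) v A V) u + nab (LC h) B (\<lambda>v. bil (Kc G h) v A V) u"
      by (rule nab_add[OF d[OF LAs] d[OF KAs]])
    also have "nab (LC h) B (\<lambda>v. bil (Kc G h) v A V) u
        = mu u *\<^sub>R Sv h u B A V + bil (Kc G h) u (bil (LC h) u B A) V + bil (Kc G h) u A (bil (LC h) u B V)"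
      using leib[where X="\<lambda>v. A" and Y="\<lambda>v. V" and Z=B, OF smooth_const smooth_const u] covK_mu[OF u]
      by (simp add: nab_const)
    finally show ?thesis unfolding LA by simp
  qed
  have cG: "Rm G u W Z V = nab G W (nab G Z (\<lambda>v. V)) u - nab G Z (nab G W (\<lambda>v. V)) u"
    using curvature[where F="\<lambda>v. V" and W=W and Z=Z, OF U_open G_smooth smooth_const u] by simp
  have cL: "Rm (LC h) u W Z V = nab (LC h) W (nab (LC h) Z (\<lambda>v. V)) u - nab (LC h) Z (nab (LC h) W (\<lambda>v. V)) u"
    using curvature[where F="\<lambda>v. V" and W=W and Z=Z, OF U_open Ls smooth_const u] by simp
  have sy: "bil (LC h) u Z W = bil (LC h) u W Z" by (rule L_symv[OF u])
  have ss: "Sv h u Z W V = Sv h u W Z V"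
    unfolding Sv_def using hform_sym[OF u] by (simp add: algebra_simps)
  show ?thesis unfolding cG cL e sy ss by (simp add: bil_add2 algebra_simps)
qed

end

context chs
begin

lemma Csym: assumes u: "u \<in> U"
  shows "hform h u (bil (Kc G h) u A V) B = hform h u (bil (Kc G h) u B V) A"
proof -
  have cod: "hform h u A (bil G u B V) + dir A (\<lambda>v. hform h v B V) u
       = hform h u B (bil G u A V) + dir B (\<lambda>v. hform h v A V) u" by (rule gauss_codazzi(2)[OF u])
  have m1: "dir A (\<lambda>v. hform h v B V) u = hform h u (bil (LC h) u A B) V + hform h u B (bil (LC h) u A V)"
    by (rule metric[OF u])
  have m2: "dir B (\<lambda>v. hform h v A V) u = hform h u (bil (LC h) u B A) V + hform h u A (bil (LC h) u B V)"
    by (rule metric[OF u])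
  have sy: "bil (LC h) u B A = bil (LC h) u A B" by (rule L_symv[OF u])
  have "hform h u A (bil G u B V - bil (LC h) u B V) = hform h u B (bil G u A V - bil (LC h) u A V)"
    using cod unfolding m1 m2 sy by (simp add: hform_diff2 algebra_simps)
  then have "hform h u A (bil (Kc G h) u B V) = hform h u B (bil (Kc G h) u A V)"
    by (simp add: G_LK)
  then show ?thesis using hform_sym[OF u] by metis
qed

end

context chs_mu
begin

lemma main_local:
  fixes p :: "real^'n" and e :: "'n \<Rightarrow> real^'n" and a :: 'n and lam :: "'n \<Rightarrow> real"
  assumes p: "p \<in> U"
    and orth: "\<forall>i j. hform h p (e i) (e j) = (if i = j then 1 else 0)"
    and eig: "\<forall>i. bil (Kc G h) p (e a) (e i) = lam i *\<^sub>R e i"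
  shows "(\<forall>l. l \<noteq> a \<longrightarrow> dir (e l) mu p = 0)
    \<and> (\<forall>l. l \<noteq> a \<longrightarrow> dir (e a) mu p = (2 * lam l - lam a) * ((lam l)\<^sup>2 - lam a * lam l + eps))
    \<and> (\<forall>j l k. j \<noteq> a \<longrightarrow> l \<noteq> a \<longrightarrow> j \<noteq> l \<longrightarrow>
            (2 * lam k - lam a) * (lam l - lam j) * hform h p (bil (Kc G h) p (e j) (e k)) (e l) = 0)
    \<and> (\<forall>l. l \<noteq> a \<longrightarrow> ((lam l)\<^sup>2 - lam a * lam l + eps) * hform h p (bil (Kc G h) p (e l) (e l)) (e l) = 0)"
proof -
  define hp where "hp = hform h p"
  define Kp where "Kp = bil (Kc G h) p"
  define R where "R = Rm (LC h) p"
  define dm where "dm W = dir W mu p" for W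
  define S where "S Z X Y = hp X Y *\<^sub>R Z + hp X Z *\<^sub>R Y + hp Y Z *\<^sub>R X" for Z X Y
  have hp_add1: "hp (X + Y) Z = hp X Z + hp Y Z" for X Y Z unfolding hp_def by (rule hform_add1)
  have hp_add2: "hp Z (X + Y) = hp Z X + hp Z Y" for X Y Z unfolding hp_def by (rule hform_add2)
  have hp_diff1: "hp (X - Y) Z = hp X Z - hp Y Z" for X Y Z unfolding hp_def by (rule hform_diff1)
  have hp_diff2: "hp Z (X - Y) = hp Z X - hp Z Y" for X Y Z unfolding hp_def by (rule hform_diff2)
  have hp_sc1: "hp (c *\<^sub>R X) Z = c * hp X Z" for c X Z unfolding hp_def by (rule hform_scale1)
  have hp_sc2: "hp Z (c *\<^sub>R X) = c * hp Z X" for c X Z unfolding hp_def by (rule hform_scale2)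
  have hp_sym: "hp X Y = hp Y X" for X Y unfolding hp_def by (rule hform_sym[OF p])
  have Kp_add1: "Kp (X + Y) Z = Kp X Z + Kp Y Z" for X Y Z unfolding Kp_def by (rule bil_add1)
  have Kp_add2: "Kp Z (X + Y) = Kp Z X + Kp Z Y" for X Y Z unfolding Kp_def by (rule bil_add2)
  have Kp_diff1: "Kp (X - Y) Z = Kp X Z - Kp Y Z" for X Y Z unfolding Kp_def by (rule bil_diff1)
  have Kp_diff2: "Kp Z (X - Y) = Kp Z X - Kp Z Y" for X Y Z unfolding Kp_def by (rule bil_diff2)
  have Kp_sc1: "Kp (c *\<^sub>R X) Z = c *\<^sub>R Kp X Z" for c X Z unfolding Kp_def by (rule bil_scale1)
  have Kp_sc2: "Kp Z (c *\<^sub>R X) = c *\<^sub>R Kp Z X" for c X Z unfolding Kp_def by (rule bil_scale2)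
  have Kp_sym: "Kp X Y = Kp Y X" for X Y unfolding Kp_def by (rule K_symv[OF p])
  have C: "hp (Kp A V) B = hp (Kp B V) A" for A V B unfolding hp_def Kp_def by (rule Csym[OF p])
  have Rf: "R W Z V = me *\<^sub>R (hp W V *\<^sub>R Z - hp Z V *\<^sub>R W) - Kp W (Kp Z V) + Kp Z (Kp W V)" for W Z V
    unfolding R_def hp_def Kp_def gaussL[OF p] gauss_codazzi(1)[OF p] ..
  have Ric: "hp (R W Z (Kp X Y)) V = dm W * hp (S Z X Y) V - dm Z * hp (S W X Y) V
     + hp (Kp (R W Z X) Y) V + hp (Kp X (R W Z Y)) V" for W Z X Y V
  proof -
    have "R W Z (Kp X Y) = dm W *\<^sub>R S Z X Y - dm Z *\<^sub>R S W X Y + Kp (R W Z X) Y + Kp X (R W Z Y)"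
      unfolding R_def Kp_def dm_def S_def hp_def using ricci[OF p, of W Z X Y] by (simp add: Sv_def)
    then show ?thesis by (simp add: hp_add1 hp_diff1 hp_sc1)
  qed
  have R_sc: "R W Z (c *\<^sub>R V) = c *\<^sub>R R W Z V" for W Z c V
    unfolding Rf by (simp add: hp_sc2 Kp_sc2 algebra_simps)
  have o: "hp (e i) (e j) = (if i = j then 1 else 0)" for i j using orth unfolding hp_def by blast
  have E: "Kp (e a) (e i) = lam i *\<^sub>R e i" for i using eig unfolding Kp_def by blast
  have E': "Kp (e i) (e a) = lam i *\<^sub>R e i" for i using E Kp_sym by metis
  have F1: "hp (Kp (e a) w) (e i) = lam i * hp w (e i)" for w i
  proof -
    have "hp (Kp (e a) w) (e i) = hp (Kp w (e a)) (e i)" by (simp add: Kp_sym)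
    also have "\<dots> = hp (Kp (e i) (e a)) w" by (rule C)
    also have "\<dots> = lam i * hp w (e i)" by (simp add: E' hp_sc1 hp_sym[of "e i" w])
    finally show ?thesis .
  qed
  define rho where "rho j = me - (lam j)\<^sup>2 + lam a * lam j" for j
  have Rea: "R (e a) (e j) (e a) = rho j *\<^sub>R e j" if j: "j \<noteq> a" for j
    unfolding Rf rho_def using j by (simp add: o E E' Kp_sc2 power2_eq_square algebra_simps)
  have me: "me = - eps" by (rule me_def)
  have c1: "dm (e l) = 0" if l: "l \<noteq> a" for l
  proof -
    have "hp (R (e a) (e l) (Kp (e a) (e a))) (e a) = dm (e a) * hp (S (e l) (e a) (e a)) (e a)
       - dm (e l) * hp (S (e a) (e a) (e a)) (e a)
       + hp (Kp (R (e a) (e l) (e a)) (e a)) (e a) + hp (Kp (e a) (R (e a) (e l) (e a))) (e a)" by (rule Ric)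
    moreover have "hp (S (e l) (e a) (e a)) (e a) = 0" using l
      by (simp only: S_def hp_add1 hp_sc1) (simp add: o)
    moreover have "hp (S (e a) (e a) (e a)) (e a) = 3"
      by (simp only: S_def hp_add1 hp_sc1) (simp add: o)
    moreover have "hp (R (e a) (e l) (Kp (e a) (e a))) (e a) = 0"
      using l by (simp add: E R_sc Rea[OF l] hp_sc1 o)
    moreover have "hp (Kp (R (e a) (e l) (e a)) (e a)) (e a) = 0"
      using l by (simp add: E' Rea[OF l] Kp_sc1 hp_sc1 o)
    moreover have "hp (Kp (e a) (R (e a) (e l) (e a))) (e a) = 0"
      using l by (simp add: E Rea[OF l] Kp_sc2 hp_sc1 o)
    ultimately show ?thesis by simp
  qed
  have c2: "dm (e a) = (2 * lam l - lam a) * ((lam l)\<^sup>2 - lam a * lam l + eps)" if l: "l \<noteq> a" for l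
  proof -
    have "hp (R (e a) (e l) (Kp (e a) (e a))) (e l) = dm (e a) * hp (S (e l) (e a) (e a)) (e l)
       - dm (e l) * hp (S (e a) (e a) (e a)) (e l)
       + hp (Kp (R (e a) (e l) (e a)) (e a)) (e l) + hp (Kp (e a) (R (e a) (e l) (e a))) (e l)" by (rule Ric)
    moreover have "hp (S (e l) (e a) (e a)) (e l) = 1" using l
      by (simp only: S_def hp_add1 hp_sc1) (simp add: o)
    moreover have "hp (R (e a) (e l) (Kp (e a) (e a))) (e l) = lam a * rho l"
      using l by (simp add: E R_sc Rea[OF l] hp_sc1 o)
    moreover have "hp (Kp (R (e a) (e l) (e a)) (e a)) (e l) = rho l * lam l"
      using l by (simp add: E' Rea[OF l] Kp_sc1 hp_sc1 o)
    moreover have "hp (Kp (e a) (R (e a) (e l) (e a))) (e l) = rho l * lam l"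
      using l by (simp add: E Rea[OF l] Kp_sc2 hp_sc1 o)
    ultimately have "lam a * rho l = dm (e a) + 2 * (rho l * lam l)" using c1[OF l] by simp
    then have "dm (e a) = lam a * rho l - 2 * (rho l * lam l)" by simp
    then show ?thesis unfolding rho_def me by (simp add: power2_eq_square algebra_simps)
  qed
  have c4: "((lam l)\<^sup>2 - lam a * lam l + eps) * hp (Kp (e l) (e l)) (e l) = 0" if l: "l \<noteq> a" for l
  proof -
    have "hp (R (e a) (e l) (Kp (e a) (e l))) (e l) = dm (e a) * hp (S (e l) (e a) (e l)) (e l)
       - dm (e l) * hp (S (e a) (e a) (e l)) (e l)
       + hp (Kp (R (e a) (e l) (e a)) (e l)) (e l) + hp (Kp (e a) (R (e a) (e l) (e l))) (e l)" by (rule Ric)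
    moreover have "hp (S (e l) (e a) (e l)) (e l) = 0" using l
      by (simp only: S_def hp_add1 hp_sc1) (simp add: o)
    moreover have "hp (R (e a) (e l) (Kp (e a) (e l))) (e l) = lam l * hp (R (e a) (e l) (e l)) (e l)"
      by (simp add: E R_sc hp_sc1)
    moreover have "hp (Kp (R (e a) (e l) (e a)) (e l)) (e l) = rho l * hp (Kp (e l) (e l)) (e l)"
      by (simp add: Rea[OF l] Kp_sc1 hp_sc1)
    moreover have "hp (Kp (e a) (R (e a) (e l) (e l))) (e l) = lam l * hp (R (e a) (e l) (e l)) (e l)"
      by (rule F1)
    ultimately have "rho l * hp (Kp (e l) (e l)) (e l) = 0" using c1[OF l] by simp
    then show ?thesis unfolding rho_def me by (simp add: power2_eq_square algebra_simps)
  qed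
  have eqA: "(lam k - lam l)\<^sup>2 * hp (Kp (e j) (e k)) (e l) = rho j * hp (Kp (e j) (e k)) (e l)"
    if j: "j \<noteq> a" and l: "l \<noteq> a" and jl: "j \<noteq> l" for j l k
  proof -
    have "hp (R (e a) (e j) (Kp (e a) (e k))) (e l) = dm (e a) * hp (S (e j) (e a) (e k)) (e l)
       - dm (e j) * hp (S (e a) (e a) (e k)) (e l)
       + hp (Kp (R (e a) (e j) (e a)) (e k)) (e l) + hp (Kp (e a) (R (e a) (e j) (e k))) (e l)" by (rule Ric)
    moreover have "hp (S (e j) (e a) (e k)) (e l) = 0" using j l jl
      by (simp only: S_def hp_add1 hp_sc1) (simp add: o)
    moreover have "hp (R (e a) (e j) (Kp (e a) (e k))) (e l) = lam k * hp (R (e a) (e j) (e k)) (e l)"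
      by (simp add: E R_sc hp_sc1)
    moreover have "hp (Kp (R (e a) (e j) (e a)) (e k)) (e l) = rho j * hp (Kp (e j) (e k)) (e l)"
      by (simp add: Rea[OF j] Kp_sc1 hp_sc1)
    moreover have "hp (Kp (e a) (R (e a) (e j) (e k))) (e l) = lam l * hp (R (e a) (e j) (e k)) (e l)"
      by (rule F1)
    moreover have "hp (R (e a) (e j) (e k)) (e l) = (lam k - lam l) * hp (Kp (e j) (e k)) (e l)"
    proof -
      have "hp (R (e a) (e j) (e k)) (e l) = me * (hp (e a) (e k) * hp (e j) (e l) - hp (e j) (e k) * hp (e a) (e l))
          - hp (Kp (e a) (Kp (e j) (e k))) (e l) + hp (Kp (e j) (Kp (e a) (e k))) (e l)"
        unfolding Rf by (simp add: hp_add1 hp_diff1 hp_sc1 algebra_simps)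
      also have "\<dots> = - (lam l * hp (Kp (e j) (e k)) (e l)) + lam k * hp (Kp (e j) (e k)) (e l)"
        using j l jl by (simp add: o F1 E Kp_sc2 hp_sc1)
      finally show ?thesis by (simp add: algebra_simps)
    qed
    ultimately have "(lam k - lam l) * ((lam k - lam l) * hp (Kp (e j) (e k)) (e l)) = rho j * hp (Kp (e j) (e k)) (e l)"
      using c1[OF j] by (simp add: algebra_simps)
    then show ?thesis by (simp add: power2_eq_square algebra_simps)
  qed
  have c3: "(2 * lam k - lam a) * (lam l - lam j) * hp (Kp (e j) (e k)) (e l) = 0"
    if j: "j \<noteq> a" and l: "l \<noteq> a" and jl: "j \<noteq> l" for j l k
  proof -
    define Cc where "Cc = hp (Kp (e j) (e k)) (e l)"
    have sC: "hp (Kp (e l) (e k)) (e j) = Cc" unfolding Cc_def by (rule C)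
    have A: "(lam k - lam l)\<^sup>2 * Cc = rho j * Cc" unfolding Cc_def by (rule eqA[OF j l jl])
    have B: "(lam k - lam j)\<^sup>2 * Cc = rho l * Cc" using eqA[OF l j jl[symmetric], of k] unfolding sC .
    have "(2 * lam k - lam a) * (lam l - lam j) * Cc
        = ((lam k - lam j)\<^sup>2 * Cc - rho l * Cc) - ((lam k - lam l)\<^sup>2 * Cc - rho j * Cc)"
      unfolding rho_def by (simp add: power2_eq_square algebra_simps)
    then show ?thesis using A B unfolding Cc_def by simp
  qed
  show ?thesis
    using c1 c2 c3 c4 unfolding dm_def hp_def Kp_def by blast
qed

end

theorem lemma3p5:
  fixes U :: "(real^'n::finite) set"
    and x :: "real^'n \<Rightarrow> (real^'n) \<times> real"
    and eps :: real
    and G :: "'n \<Rightarrow> 'n \<Rightarrow> 'n \<Rightarrow> real^'n \<Rightarrow> real"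
    and h :: "'n \<Rightarrow> 'n \<Rightarrow> real^'n \<Rightarrow> real"
    and mu :: "real^'n \<Rightarrow> real"
    and p :: "real^'n"
    and e :: "'n \<Rightarrow> real^'n"
    and a :: 'n
    and lam :: "'n \<Rightarrow> real"
  assumes hyp: "centroaffine_hypersurface U x eps G h"
    and convex: "positive_definite_on U h"
    and mu_smooth: "smooth_on U mu"
    and mu_eq: "\<forall>u\<in>U. \<forall>X Y Z. covK G h u Z X Y =
        mu u *\<^sub>R (hform h u X Y *\<^sub>R Z + hform h u X Z *\<^sub>R Y + hform h u Y Z *\<^sub>R X)"
    and p_in: "p \<in> U"
    and orthonormal: "\<forall>i j. hform h p (e i) (e j) = (if i = j then 1 else 0)"
    and max: "\<forall>v. hform h p v v = 1 \<longrightarrow>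
        hform h p (Kt G h p v v) v \<le> hform h p (Kt G h p (e a) (e a)) (e a)"
    and eigen: "\<forall>i. Kt G h p (e a) (e i) = lam i *\<^sub>R e i"
    and lam_ineq: "\<forall>i. i \<noteq> a \<longrightarrow> lam a \<ge> 2 * lam i"
    and lam_eq: "\<forall>i. i \<noteq> a \<longrightarrow> lam a = 2 * lam i \<longrightarrow> hform h p (Kt G h p (e i) (e i)) (e i) = 0"
  shows "(\<forall>l. l \<noteq> a \<longrightarrow> frechet_derivative mu (at p) (e l) = 0)
    \<and> (\<forall>l. l \<noteq> a \<longrightarrow> frechet_derivative mu (at p) (e a)
            = (2 * lam l - lam a) * ((lam l)\<^sup>2 - lam a * lam l + eps))
    \<and> (\<forall>j l k. j \<noteq> a \<longrightarrow> l \<noteq> a \<longrightarrow> j \<noteq> l \<longrightarrow>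
            (2 * lam k - lam a) * (lam l - lam j) * hform h p (Kt G h p (e j) (e k)) (e l) = 0)
    \<and> (\<forall>l. l \<noteq> a \<longrightarrow> ((lam l)\<^sup>2 - lam a * lam l + eps) * hform h p (Kt G h p (e l) (e l)) (e l) = 0)"
proof -
  interpret M: chs_mu U x eps G h mu
    by unfold_locales (simp_all add: hyp convex mu_smooth mu_eq)
  have Kt: "\<And>u X Y. Kt G h u X Y = bil (Kc G h) u X Y" by (simp add: Kt_def bil_def)
  have fd: "\<And>W. frechet_derivative mu (at p) W = dir W mu p" by (simp add: dir_def)
  have eig': "\<forall>i. bil (Kc G h) p (e a) (e i) = lam i *\<^sub>R e i" using eigen by (simp add: Kt)
  show ?thesis using M.main_local[OF p_in orthonormal eig'] unfolding Kt fd .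
qed

end
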